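(* Let $n\geq 2$ and let $u:[0,\infty)\to\mathbb{R}$ be the potential of a rotationally symmetric ($U(n)$ invariant) extremal Kähler metric $\omega=i\partial\overline\partial u(|z|^2)$ on $\mathbb{C}^n$, and set $g(s)=su'(s)$ for $s=|z|^2$. Then one of the following holds: (1) $\omega$ is a constant scalar curvature Kähler metric. (2) There exist constants $\beta,c$ with $\beta>0$ such that $g$ is the smooth strictly increasing function $g:(0,\infty)\to(0,\beta)$ determined by the ODE $sg'(s)=\frac{1}{\beta^2}g(s)(g(s)-\beta)^2$; integrating, $\log(g(s))-\log(\beta-g(s))-\frac{\beta}{g(s)-\beta}=\log s+c$. These metrics have positive non-constant scalar curvature. (3) There exist constants $\gamma,\beta,c$ with $\gamma<0<\beta$ such that $g$ is the smooth strictly increasing function $g:(0,\infty)\to(0,\beta)$ determined by the ODE $sg'(s)=\frac{1}{\beta\gamma}g(s)(g(s)-\beta)(g(s)-\gamma)$; integrating, $\log(g(s))+\frac{\beta\gamma}{\beta(\beta-\gamma)}\log(\beta-g(s))+\frac{\beta\gamma}{\gamma(\gamma-\beta)}\log(g(s)-\gamma)=\log s+c$. (4) There exist constants $\gamma,\beta,c$ with $0<\beta<\gamma$ such that $g$ is the smooth strictly increasing function $g:(0,\infty)\to(0,\beta)$ determined by the ODE $sg'(s)=\frac{1}{\beta\gamma}g(s)(g(s)-\beta)(g(s)-\gamma)$; integrating, $\log(g(s))+\frac{\beta\gamma}{\beta(\beta-\gamma)}\log(\beta-g(s))+\frac{\beta\gamma}{\gamma(\gamma-\beta)}\log(\gamma-g(s))=\log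 s+c$.
   Context: A rotationally symmetric Kähler metric on (a domain of) $\mathbb{C}^n$ is given by a potential $u(s)$, $s=|z|^2=\sum_j|z_j|^2$, via $\omega=i\partial\overline\partial u=i\sum_{j,k}(\delta_{jk}u'(s)+u''(s)\overline z_jz_k)\,dz^j\wedge d\overline z^k$, which is positive definite iff $u'>0$ and $u'+su''>0$. A Kähler metric is extremal (in the sense of Calabi) if its scalar curvature $R$ satisfies $R_{,\overline\alpha\overline\beta}=0$, i.e. the $(1,0)$-gradient $g^{\alpha\overline\beta}\partial R/\partial\overline z_\beta\,\partial_{z_\alpha}$ is holomorphic. *)

theory Defs
  imports "HOL-Analysis.Analysis"
begin

text \<open>Wirtinger derivatives on C^n (modelled as complex^'n), defined from the real
  Frechet derivative: d/dz_j = (D(e_j) - i D(i e_j))/2, d/dzbar_j = (D(e_j) + i D(i e_j))/2.\<close>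

definition wirt :: "(complex^'n \<Rightarrow> complex) \<Rightarrow> 'n \<Rightarrow> complex^'n \<Rightarrow> complex" where
  "wirt f j z = (frechet_derivative f (at z) (axis j 1)
                 - \<i> * frechet_derivative f (at z) (axis j \<i>)) / 2"

definition wirtbar :: "(complex^'n \<Rightarrow> complex) \<Rightarrow> 'n \<Rightarrow> complex^'n \<Rightarrow> complex" where
  "wirtbar f j z = (frechet_derivative f (at z) (axis j 1)
                 + \<i> * frechet_derivative f (at z) (axis j \<i>)) / 2"

definition smooth_on_real :: "(real \<Rightarrow> real) \<Rightarrow> real set \<Rightarrow> bool" where
  "smooth_on_real u S = (\<forall>k. \<forall>x\<in>S. ((deriv ^^ k) u) differentiable (at x))"

text \<open>Coefficients g_{j kbar} of omega = i ddbar u(|z|^2), as in the context.\<close>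
definition kmetric :: "(real \<Rightarrow> real) \<Rightarrow> complex^'n \<Rightarrow> complex^'n^'n" where
  "kmetric u z = (\<chi> j k. (if j = k then complex_of_real (deriv u ((norm z)\<^sup>2)) else 0)
        + complex_of_real (deriv (deriv u) ((norm z)\<^sup>2)) * cnj (z $ j) * z $ k)"

text \<open>log det (g_{j kbar}) (the determinant is real positive for a Kaehler metric).\<close>
definition logdet :: "(real \<Rightarrow> real) \<Rightarrow> complex^'n \<Rightarrow> complex" where
  "logdet u z = complex_of_real (ln (norm (det (kmetric u z))))"

definition ricci :: "(real \<Rightarrow> real) \<Rightarrow> 'n \<Rightarrow> 'n \<Rightarrow> complex^'n \<Rightarrow> complex" where
  "ricci u j k z = - wirt (wirtbar (logdet u) k) j z"

text \<open>Scalar curvature R = g^{j kbar} R_{j kbar}, where the inverse metric g^{j kbar}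
  satisfies sum_k g^{j kbar} g_{l kbar} = delta_{jl}, i.e. g^{j kbar} = (G^{-1})_{k j}.\<close>
definition scal :: "(real \<Rightarrow> real) \<Rightarrow> complex^'n \<Rightarrow> real" where
  "scal u z = Re (\<Sum>j\<in>UNIV. \<Sum>k\<in>UNIV. matrix_inv (kmetric u z) $ k $ j * ricci u j k z)"

definition grad10 :: "(real \<Rightarrow> real) \<Rightarrow> complex^'n \<Rightarrow> complex^'n" where
  "grad10 u z = (\<chi> a. \<Sum>b\<in>UNIV. matrix_inv (kmetric u z) $ b $ a
                     * wirtbar (\<lambda>w. complex_of_real (scal u w)) b z)"

definition holomorphic_field :: "(complex^('n::finite) \<Rightarrow> complex^'n) \<Rightarrow> bool" where
  "holomorphic_field V = (\<forall>a. \<forall>z. (\<lambda>w. V w $ a) differentiable (at z)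
                              \<and> (\<forall>b. wirtbar (\<lambda>w. V w $ a) b z = 0))"

definition extremal :: "(real \<Rightarrow> real) \<Rightarrow> ('n::finite) itself \<Rightarrow> bool" where
  "extremal u (_ :: 'n itself) = holomorphic_field (grad10 u :: complex^'n \<Rightarrow> complex^'n)"

definition kaehler_potential :: "(real \<Rightarrow> real) \<Rightarrow> bool" where
  "kaehler_potential u = ((\<exists>S. open S \<and> {0..} \<subseteq> S \<and> smooth_on_real u S)
      \<and> (\<forall>s\<ge>0. deriv u s > 0 \<and> deriv u s + s * deriv (deriv u) s > 0))"

definition gfun :: "(real \<Rightarrow> real) \<Rightarrow> real \<Rightarrow> real" where
  "gfun u s = s * deriv u s"

end

theory Submission
  imports Defs
begin


lemma det_onerow:
  fixes A :: "'a::comm_ring_1^'n^'n"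
  assumes ld: "\<And>i j. i \<noteq> k \<Longrightarrow> i \<noteq> j \<Longrightarrow> A$i$j = 0"
  shows "det A = prod (\<lambda>i. A$i$i) (UNIV::'n set)"
proof -
  let ?U = "UNIV:: 'n set"
  let ?PU = "{p. p permutes ?U}"
  let ?pp = "\<lambda>p. of_int (sign p) * prod (\<lambda>i. A$i$p i) (UNIV :: 'n set)"
  have fU: "finite ?U" by simp
  from finite_permutations[OF fU] have fPU: "finite ?PU" .
  have id0: "{id} \<subseteq> ?PU"
    by (auto simp: permutes_id)
  have p0: "\<forall>p \<in> ?PU - {id}. ?pp p = 0"
  proof
    fix p
    assume p: "p \<in> ?PU - {id}"
    then obtain i where i: "p i \<noteq> i"
      by fastforce
    have "\<exists>i. p i \<noteq> i \<and> i \<noteq> k"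
    proof (cases "i = k")
      case True
      have pu: "p permutes ?U" using p by auto
      have "p (p k) \<noteq> p k"
        using i True permutes_inj[OF pu] by (metis injD)
      moreover have "p k \<noteq> k" using i True by simp
      ultimately show ?thesis by blast
    next
      case False then show ?thesis using i by blast
    qed
    with ld have "\<exists>i \<in> ?U. A$i$p i = 0"
      by (metis UNIV_I)
    with prod_zero [OF fU] show "?pp p = 0"
      by force
  qed
  from sum.mono_neutral_cong_left[OF fPU id0 p0] show ?thesis
    unfolding det_def by (simp add: sign_id)
qed

lemma mult_colpert:
  fixes A :: "'a::comm_ring_1^'n^'n"
  shows "(A ** (\<chi> l j. (if l = j then 1 else 0) + (if j = k then v$l else 0)))$i$j
       = A$i$j + (if j = k then (\<Sum>l\<in>UNIV. A$i$l * v$l) else 0)"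
  by (simp add: matrix_matrix_mult_def distrib_left sum.distrib if_distrib[where f="\<lambda>x. _ * x"] 
       sum.delta cong: if_cong)

lemma mult_rowpert:
  fixes A :: "'a::comm_ring_1^'n^'n"
  shows "((\<chi> i l. (if i = l then 1 else 0) - (if l = k then v$i else 0)) ** A)$i$j
       = A$i$j - v$i * A$k$j"
  by (simp add: matrix_matrix_mult_def left_diff_distrib sum_subtractf if_distrib[where f="\<lambda>x. x * _"] 
       sum.delta cong: if_cong)


lemma det_rk:
  fixes x y :: "'a::field^'n"
  assumes a0: "a \<noteq> 0"
  shows "det (\<chi> i j. (if i = j then a else 0) + x$i * y$j)
         = a^(CARD('n) - 1) * (a + (\<Sum>l\<in>UNIV. x$l * y$l))"
proof (cases "x = 0")
  case True
  have cp: "CARD('n) > 0" by simp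
  have "det (\<chi> i j. (if i = j then a else 0) + x$i * y$j) = prod (\<lambda>i. a) (UNIV::'n set)"
    using True by (subst det_diagonal) auto
  also have "\<dots> = a^CARD('n)" by simp
  also have "\<dots> = a^(CARD('n) - 1) * a"
    using cp by (metis Suc_diff_1 power_Suc2)
  finally show ?thesis using True by simp
next
  case False
  then obtain k where xk: "x$k \<noteq> 0" by (metis vec_eq_iff zero_index)
  define M where "M = (\<chi> i j. (if i = j then a else 0) + x$i * y$j)"
  define v where "v = (\<chi> i. if i = k then 0 else x$i / x$k)"
  define R :: "'a^'n^'n" where "R = (\<chi> i l. (if i = l then 1 else 0) - (if l = k then v$i else 0))"
  define C :: "'a^'n^'n" where "C = (\<chi> l j. (if l = j then 1 else 0) + (if j = k then v$l else 0))"
  have vk: "v$k = 0" by (simp add: v_def)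
  have dR: "det R = 1"
  proof -
    have "det R = det (transpose R)" by simp
    also have "\<dots> = prod (\<lambda>i. transpose R $ i $ i) UNIV"
      by (rule det_onerow[where k=k]) (auto simp: transpose_def R_def)
    also have "\<dots> = 1" by (rule prod.neutral) (simp add: transpose_def R_def vk)
    finally show ?thesis .
  qed
  have dC: "det C = 1"
  proof -
    have "det C = det (transpose C)" by simp
    also have "\<dots> = prod (\<lambda>i. transpose C $ i $ i) UNIV"
      by (rule det_onerow[where k=k]) (auto simp: transpose_def C_def)
    also have "\<dots> = 1" by (rule prod.neutral) (simp add: transpose_def C_def vk)
    finally show ?thesis .
  qed
  have RM: "(R ** M)$i$j = M$i$j - v$i * M$k$j" for i j
    unfolding R_def by (rule mult_rowpert)
  have sM: "(\<Sum>l\<in>UNIV. M$i$l * v$l) = a * v$i + x$i * (\<Sum>l\<in>UNIV. y$l * v$l)" for i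
    by (simp add: M_def distrib_right sum.distrib sum_distrib_left mult.assoc if_distrib[where f="\<lambda>x. x * _"] 
       sum.delta cong: if_cong)
  have yv: "x$k * (\<Sum>l\<in>UNIV. y$l * v$l) = (\<Sum>l\<in>UNIV. x$l * y$l) - x$k * y$k"
  proof -
    have "x$k * (\<Sum>l\<in>UNIV. y$l * v$l) = (\<Sum>l\<in>UNIV. if l = k then 0 else x$l * y$l)"
      by (auto simp: sum_distrib_left v_def xk intro!: sum.cong)
    also have "\<dots> = (\<Sum>l\<in>UNIV. x$l * y$l) - x$k * y$k"
      by (simp add: sum.If_cases Diff_eq[symmetric] sum_diff1)
    finally show ?thesis .
  qed
  have xv: "x$i - v$i * x$k = (if i = k then x$k else 0)" for i
    using xk by (simp add: v_def)
  have T: "(R ** M ** C)$i$j = (if i = j then a else 0)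
       + (if i = k then x$k * y$j + (if j = k then (\<Sum>l\<in>UNIV. x$l * y$l) - x$k * y$k else 0) else 0)" for i j
  proof -
    have "(R ** M ** C)$i$j = (R ** M)$i$j + (if j = k then (\<Sum>l\<in>UNIV. (R ** M)$i$l * v$l) else 0)"
      unfolding C_def by (rule mult_colpert)
    also have "(\<Sum>l\<in>UNIV. (R ** M)$i$l * v$l) = (\<Sum>l\<in>UNIV. M$i$l * v$l) - v$i * (\<Sum>l\<in>UNIV. M$k$l * v$l)"
      by (simp add: RM left_diff_distrib sum_subtractf sum_distrib_left mult.assoc)
    also have "\<dots> = a * v$i + (x$i - v$i * x$k) * (\<Sum>l\<in>UNIV. y$l * v$l)"
      by (simp only: sM[of i] sM[of k] vk) (simp add: algebra_simps)
    also have "(R ** M)$i$j = M$i$j - v$i * M$k$j" by (rule RM)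
    finally have e: "(R ** M ** C)$i$j = M$i$j - v$i * M$k$j + (if j = k then a * v$i + (if i = k then x$k else 0) * (\<Sum>l\<in>UNIV. y$l * v$l) else 0)"
      by (simp add: xv)
    show ?thesis
      unfolding e using yv xk by (auto simp: M_def v_def algebra_simps)
  qed
  have "det (R ** M ** C) = prod (\<lambda>i. (R ** M ** C) $ i $ i) UNIV"
    by (rule det_onerow[where k=k]) (simp add: T)
  also have "\<dots> = prod (\<lambda>i. if i = k then a + (\<Sum>l\<in>UNIV. x$l * y$l) else a) UNIV"
    by (rule prod.cong) (auto simp: T)
  also have "\<dots> = a^(CARD('n) - 1) * (a + (\<Sum>l\<in>UNIV. x$l * y$l))"
    by (simp add: prod.If_cases Diff_eq[symmetric] card_Diff_singleton)
  finally show ?thesis using dR dC by (simp add: det_mul M_def)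
qed


lemma matrix_inv_eq:
  fixes A B :: "'a::comm_ring_1^'n^'n"
  assumes "A ** B = mat 1" "B ** A = mat 1"
  shows "matrix_inv A = B"
proof -
  let ?P = "\<lambda>A'. A ** A' = mat 1 \<and> A' ** A = mat 1"
  have "?P (matrix_inv A)" unfolding matrix_inv_def by (rule someI[of ?P B]) (use assms in auto)
  then have "matrix_inv A = matrix_inv A ** (A ** B)" using assms by (simp add: matrix_mul_rid)
  also have "\<dots> = (matrix_inv A ** A) ** B" by (simp add: matrix_mul_assoc)
  also have "\<dots> = B" using \<open>?P (matrix_inv A)\<close> by (simp add: matrix_mul_lid)
  finally show ?thesis .
qed

lemma inv_rk:
  fixes x y :: "'a::field^'n"
  assumes a0: "a \<noteq> 0" and d0: "a + (\<Sum>l\<in>UNIV. y$l * x$l) \<noteq> 0"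
  shows "matrix_inv (\<chi> i j. (if i = j then a else 0) + x$i * y$j)
       = (\<chi> i j. ((if i = j then 1 else 0) - x$i * y$j / (a + (\<Sum>l\<in>UNIV. y$l * x$l))) / a)"
proof -
  define S where "S = (\<Sum>l\<in>UNIV. y$l * x$l)"
  have d0: "a + S \<noteq> 0" using d0 S_def by simp
  have key: "inverse a - inverse (a + S) - S * inverse (a + S) * inverse a = 0"
  proof -
    have e1: "inverse (a + S) * (a + S) = 1" using d0 by simp
    have e2: "inverse a * a = 1" using a0 by simp
    have "inverse a = inverse a * (inverse (a + S) * (a + S))" by (simp add: e1)
    also have "\<dots> = (inverse a * a) * inverse (a + S) + S * inverse (a + S) * inverse a"
      by (simp add: algebra_simps)
    finally have "inverse a = inverse (a + S) + S * inverse (a + S) * inverse a" by (simp add: e2)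
    then show ?thesis by (simp add: algebra_simps)
  qed
  have ai: "a * (inverse a * X) = X" for X using a0 by (simp add: mult.assoc[symmetric])
  have d1: "S * a + a * a \<noteq> 0" "a * S + a * a \<noteq> 0" "S + a \<noteq> 0"
    using d0 a0 by (metis add.commute distrib_left mult.commute no_zero_divisors)+
  show ?thesis unfolding S_def[symmetric]
proof (rule matrix_inv_eq)
  let ?d = "a + S"
  let ?s = "S"
  show "(\<chi> i j. (if i = j then a else 0) + x$i * y$j) ** (\<chi> i j. ((if i = j then 1 else 0) - x$i * y$j / ?d) / a) = mat 1"
  proof -
    have "(\<Sum>l\<in>UNIV. ((if i = l then a else 0) + x$i * y$l) * (((if l = j then 1 else 0) - x$l * y$j / ?d) / a))
          = (if i = j then 1 else 0)" for i j
    proof -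
      have "(\<Sum>l\<in>UNIV. ((if i = l then a else 0) + x$i * y$l) * (((if l = j then 1 else 0) - x$l * y$j / ?d) / a))
         = (\<Sum>l\<in>UNIV. (if i = l then ((if l = j then 1 else 0) - x$l * y$j / ?d) else 0))
           + (\<Sum>l\<in>UNIV. x$i * y$l * (if l = j then 1 else 0) / a) - (\<Sum>l\<in>UNIV. x$i * (y$l * x$l) * y$j / ?d / a)"
      proof -
        have pt: "((if i = l then a else 0) + x$i * y$l) * (((if l = j then 1 else 0) - x$l * y$j / ?d) / a) = (if i = l then ((if l = j then 1 else 0) - x$l * y$j / ?d) else 0) + x$i * y$l * (if l = j then 1 else 0) / a - x$i * (y$l * x$l) * y$j / ?d / a" for l
          using a0 by (cases "i = l"; cases "l = j"; simp add: divide_inverse algebra_simps ai)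
        show ?thesis by (simp only: pt sum.distrib sum_subtractf)
      qed
      also have "\<dots> = (if i = j then 1 else 0) - x$i * y$j / ?d + x$i * y$j / a - x$i * ?s * y$j / ?d / a"
        by (simp add: S_def sum_distrib_left[symmetric] sum_distrib_right[symmetric] sum_divide_distrib[symmetric] if_distrib[where f="\<lambda>z. _ * z"] cong: if_cong)
      also have "\<dots> = (if i = j then 1 else 0) + x$i * y$j * (inverse a - inverse ?d - S * inverse ?d * inverse a)"
        by (simp add: divide_inverse algebra_simps)
      also have "\<dots> = (if i = j then 1 else 0)" by (simp add: key)
      finally show ?thesis .
    qed
    then show ?thesis by (simp add: matrix_matrix_mult_def mat_def vec_eq_iff)
  qed
  show "(\<chi> i j. ((if i = j then 1 else 0) - x$i * y$j / ?d) / a) ** (\<chi> i j. (if i = j then a else 0) + x$i * y$j) = mat 1"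
  proof -
    have "(\<Sum>l\<in>UNIV. (((if i = l then 1 else 0) - x$i * y$l / ?d) / a) * ((if l = j then a else 0) + x$l * y$j))
          = (if i = j then 1 else 0)" for i j
    proof -
      have "(\<Sum>l\<in>UNIV. (((if i = l then 1 else 0) - x$i * y$l / ?d) / a) * ((if l = j then a else 0) + x$l * y$j))
         = (\<Sum>l\<in>UNIV. (if i = l then ((if l = j then 1 else 0) + x$l * y$j / a) else 0))
           - (\<Sum>l\<in>UNIV. x$i * y$l * (if l = j then 1 else 0) / ?d) - (\<Sum>l\<in>UNIV. x$i * (y$l * x$l) * y$j / ?d / a)"
      proof -
        have pt: "(((if i = l then 1 else 0) - x$i * y$l / ?d) / a) * ((if l = j then a else 0) + x$l * y$j) = (if i = l then ((if l = j then 1 else 0) + x$l * y$j / a) else 0) - x$i * y$l * (if l = j then 1 else 0) / ?d - x$i * (y$l * x$l) * y$j / ?d / a" for l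
          using a0 by (cases "i = l"; cases "l = j"; simp add: divide_inverse algebra_simps ai)
        show ?thesis by (simp only: pt sum.distrib sum_subtractf)
      qed
      also have "\<dots> = (if i = j then 1 else 0) + x$i * y$j / a - x$i * y$j / ?d - x$i * ?s * y$j / ?d / a"
        by (simp add: S_def sum_distrib_left[symmetric] sum_distrib_right[symmetric] sum_divide_distrib[symmetric] if_distrib[where f="\<lambda>z. _ * z"] cong: if_cong)
      also have "\<dots> = (if i = j then 1 else 0) + x$i * y$j * (inverse a - inverse ?d - S * inverse ?d * inverse a)"
        by (simp add: divide_inverse algebra_simps)
      also have "\<dots> = (if i = j then 1 else 0)" by (simp add: key)
      finally show ?thesis .
    qed
    then show ?thesis by (simp add: matrix_matrix_mult_def mat_def vec_eq_iff)
  qed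
qed
qed


lemma has_derivative_N:
  fixes z :: "'a::real_inner"
  shows "((\<lambda>w. (norm w)^2) has_derivative (\<lambda>h. 2 * inner z h)) (at z)"
proof -
  have "((\<lambda>w. inner w w) has_derivative (\<lambda>h. inner z h + inner h z)) (at z)"
    by (rule has_derivative_inner[OF has_derivative_ident has_derivative_ident])
  moreover have "(\<lambda>h. inner z h + inner h z) = (\<lambda>h. 2 * inner z h)"
    by (rule ext) (metis inner_commute mult_2)
  ultimately show ?thesis
    by (simp add: power2_norm_eq_inner)
qed

lemma has_derivative_FN:
  fixes z :: "complex^'n"
  assumes "(F has_real_derivative F') (at ((norm z)^2))"
  shows "((\<lambda>w. complex_of_real (F ((norm w)^2))) has_derivative
          (\<lambda>h. complex_of_real (F' * (2 * inner z h)))) (at z)"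
proof -
  have "((\<lambda>w. F ((norm w)^2)) has_derivative (\<lambda>h. F' * (2 * inner z h))) (at z)"
    using has_derivative_compose[OF has_derivative_N has_field_derivative_imp_has_derivative[OF assms]]
    by simp
  then show ?thesis by (rule has_derivative_of_real)
qed

lemma has_derivative_nth:
  "((\<lambda>w::complex^'n. w $ k) has_derivative (\<lambda>h. h $ k)) (at z)"
  by (rule bounded_linear.has_derivative[OF bounded_linear_vec_nth has_derivative_ident])

lemma wirtbar_F:
  fixes z :: "complex^'n"
  assumes "(F has_real_derivative F') (at ((norm z)^2))"
  shows "wirtbar (\<lambda>w. complex_of_real (F ((norm w)^2))) j z = complex_of_real F' * z$j"
proof -
  note d = frechet_derivative_at[OF has_derivative_FN[OF assms]]
  show ?thesis
    unfolding wirtbar_def d[symmetric]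
    by (simp add: inner_axis complex_eq_iff)
qed

lemma has_derivative_FNk:
  fixes z :: "complex^'n"
  assumes "(F has_real_derivative F') (at ((norm z)^2))"
  shows "((\<lambda>w. complex_of_real (F ((norm w)^2)) * w $ k) has_derivative
          (\<lambda>h. complex_of_real (F ((norm z)^2)) * h $ k + complex_of_real (F' * (2 * inner z h)) * z $ k)) (at z)"
  using has_derivative_mult[OF has_derivative_FN[OF assms] has_derivative_nth[of k z]] by simp


lemma wirtbar_FNk:
  fixes z :: "complex^'n"
  assumes "(F has_real_derivative F') (at ((norm z)^2))"
  shows "wirtbar (\<lambda>w. complex_of_real (F ((norm w)^2)) * w $ k) j z = complex_of_real F' * z$j * z$k"
proof -
  note d = frechet_derivative_at[OF has_derivative_FNk[OF assms]]
  show ?thesis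
    unfolding wirtbar_def d[symmetric] inner_axis
    by (cases "j = k") (simp_all add: complex_eq_iff axis_def field_simps)
qed

lemma wirt_FNk:
  fixes z :: "complex^'n"
  assumes "(F has_real_derivative F') (at ((norm z)^2))"
  shows "wirt (\<lambda>w. complex_of_real (F ((norm w)^2)) * w $ k) j z
     = complex_of_real F' * cnj (z$j) * z$k + (if j = k then complex_of_real (F ((norm z)^2)) else 0)"
proof -
  note d = frechet_derivative_at[OF has_derivative_FNk[OF assms]]
  show ?thesis
    unfolding wirt_def d[symmetric] inner_axis
    by (cases "j = k") (simp_all add: complex_eq_iff axis_def field_simps)
qed


definition "D u k = (deriv^^k) u"
definition "G1 u t = D u 1 t + t * D u 2 t"
definition "G2 u t = 2 * D u 2 t + t * D u 3 t"
definition "LL n u t = real (n - 1) * ln (D u 1 t) + ln (G1 u t)"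
definition "L1 n u t = real (n - 1) * D u 2 t / D u 1 t + G2 u t / G1 u t"
definition "L2 n u t = real (n - 1) * (D u 3 t * D u 1 t - (D u 2 t)^2) / (D u 1 t)^2
    + ((3 * D u 3 t + t * D u 4 t) * G1 u t - (G2 u t)^2) / (G1 u t)^2"
definition "RS n u t = - real (n - 1) * L1 n u t / D u 1 t - (L1 n u t + t * L2 n u t) / G1 u t"

definition "good u \<longleftrightarrow> (\<forall>k x. x \<ge> 0 \<longrightarrow> (D u k has_real_derivative D u (Suc k) x) (at x))
   \<and> (\<forall>x\<ge>0. D u 1 x > 0 \<and> G1 u x > 0)"

lemma D_Suc: "D u (Suc k) = deriv (D u k)"
  by (simp add: D_def)

lemma D1: "D u 1 = deriv u" and D2: "D u 2 = deriv (deriv u)"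
  by (simp_all add: D_def numeral_2_eq_2)

lemma kp_good: assumes "kaehler_potential u" shows "good u"
proof -
  from assms obtain S where S: "open S" "{0..} \<subseteq> S" "smooth_on_real u S"
    and pos: "\<forall>s\<ge>0. deriv u s > 0 \<and> deriv u s + s * deriv (deriv u) s > 0"
    unfolding kaehler_potential_def by blast
  have "(D u k has_real_derivative D u (Suc k) x) (at x)" if "x \<ge> 0" for k x
  proof -
    have "x \<in> S" using S(2) that by auto
    then have "(D u k) differentiable (at x)" using S(3) unfolding smooth_on_real_def D_def by blast
    then show ?thesis by (simp add: D_Suc DERIV_deriv_iff_real_differentiable)
  qed
  moreover have "\<forall>x\<ge>0. D u 1 x > 0 \<and> G1 u x > 0" using pos unfolding G1_def D1 D2 by simp
  ultimately show ?thesis unfolding good_def by blast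
qed

context
  fixes u :: "real \<Rightarrow> real" and x :: real
  assumes gd: "good u" and x0: "x \<ge> 0"
begin

lemma dD: "(D u k has_real_derivative D u (Suc k) x) (at x)"
  using gd x0 unfolding good_def by blast

lemma dDc: "((\<lambda>t. D u k t) has_real_derivative D u (Suc k) x) (at x)"
  using dD by simp

lemma dD1[derivative_intros]: "((\<lambda>t. D u 1 t) has_real_derivative D u 2 x) (at x)"
  using dD[of 1] by (simp add: numeral_2_eq_2)
lemma dD2[derivative_intros]: "((\<lambda>t. D u 2 t) has_real_derivative D u 3 x) (at x)"
  using dD[of 2] by (simp add: numeral_3_eq_3 numeral_2_eq_2)
lemma dD3[derivative_intros]: "((\<lambda>t. D u 3 t) has_real_derivative D u 4 x) (at x)"
proof - have "Suc 3 = 4" by simp then show ?thesis using dD[of 3] by simp qed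
lemma dD4[derivative_intros]: "((\<lambda>t. D u 4 t) has_real_derivative D u 5 x) (at x)"
proof - have "Suc 4 = 5" by simp then show ?thesis using dD[of 4] by simp qed

lemma pD1: "D u 1 x > 0" and pG1: "G1 u x > 0"
  using gd x0 unfolding good_def by auto

lemma dG1: "(G1 u has_real_derivative G2 u x) (at x)"
proof -
  have "((\<lambda>t. D u 1 t + t * D u 2 t) has_real_derivative (D u 2 x + (1 * D u 2 x + x * D u 3 x))) (at x)"
    using dD1 dD2 by (auto intro!: derivative_eq_intros )
  then show ?thesis by (simp add: G1_def[abs_def] G2_def)
qed

lemma dG: "((\<lambda>t. t * D u 1 t) has_real_derivative G1 u x) (at x)"
proof -
  have "((\<lambda>t. t * D u 1 t) has_real_derivative (1 * D u 1 x + x * D u 2 x)) (at x)"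
    using dD1 by (auto intro!: derivative_eq_intros )
  then show ?thesis by (simp add: G1_def)
qed

lemma dLL: "(LL n u has_real_derivative L1 n u x) (at x)"
proof -
  have "((\<lambda>t. real (n - 1) * ln (D u 1 t) + ln (G1 u t)) has_real_derivative
      real (n - 1) * (D u 2 x / D u 1 x) + G2 u x / G1 u x) (at x)"
    using pD1 pG1 dG1 dD1
    by (auto intro!: derivative_eq_intros simp: field_simps)
  then show ?thesis by (simp add: LL_def[abs_def] L1_def)
qed

lemma dG2: "(G2 u has_real_derivative 3 * D u 3 x + x * D u 4 x) (at x)"
proof -
  have "((\<lambda>t. 2 * D u 2 t + t * D u 3 t) has_real_derivative (2 * D u 3 x + (1 * D u 3 x + x * D u 4 x))) (at x)"
    using dD2 dD3 by (auto intro!: derivative_eq_intros )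
  then show ?thesis by (simp add: G2_def[abs_def] algebra_simps)
qed

lemma dL1: "(L1 n u has_real_derivative L2 n u x) (at x)"
proof -
  have "((\<lambda>t. real (n - 1) * D u 2 t / D u 1 t + G2 u t / G1 u t) has_real_derivative
      real (n - 1) * ((D u 3 x * D u 1 x - D u 2 x * D u 2 x) / (D u 1 x * D u 1 x))
      + ((3 * D u 3 x + x * D u 4 x) * G1 u x - G2 u x * G2 u x) / (G1 u x * G1 u x)) (at x)"
    using pD1 pG1 dG1 dG2 dD1 dD2
    by (auto intro!: derivative_eq_intros simp: field_simps)
  then show ?thesis by (simp add: L1_def[abs_def] L2_def power2_eq_square)
qed

lemma RS_diff: "RS n u differentiable (at x)"
proof -
  have "\<exists>E. ((\<lambda>t. - real (n - 1) * L1 n u t / D u 1 t - (L1 n u t + t * L2 n u t) / G1 u t) has_real_derivative E) (at x)"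
    unfolding L2_def
    using pD1 pG1 dG1 dG2 dD1 dD2 dD3 dD4 dL1
    by (intro exI) (auto intro!: derivative_eq_intros )
  then show ?thesis unfolding RS_def[abs_def] L2_def by (simp add: real_differentiable_def)
qed

end




lemma pfa0:
  fixes G X Y b c d :: real
  assumes "G \<noteq> 0" "X \<noteq> 0" "Y \<noteq> 0" "d \<noteq> 0"
  shows "1 / G + c / d * (1 / X) - b / d * (1 / Y) - b * c / (G * X * Y)
     = (d * X * Y + c * G * Y - b * G * X - d * b * c) / (d * G * X * Y)"
  using assms by (simp add: field_simps)
lemma pfa:
  fixes G X Y b c :: real
  assumes "G \<noteq> 0" "X \<noteq> 0" "Y \<noteq> 0" "b \<noteq> c" and hX: "X = G - b" and hY: "Y = G - c"
  shows "1 / G + c / (b - c) * (1 / X) + b / (c - b) * (1 / Y) = b * c / (G * X * Y)"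
proof -
  define d where "d = b - c"
  have d0: "d \<noteq> 0" using assms d_def by simp
  have cb: "c - b = - d" using d_def by simp
  have "1 / G + c / (b - c) * (1 / X) + b / (c - b) * (1 / Y) - b * c / (G * X * Y)
     = 1 / G + c / d * (1 / X) - b / d * (1 / Y) - b * c / (G * X * Y)"
    unfolding cb d_def[symmetric] by simp
  also have "\<dots> = (d * X * Y + c * G * Y - b * G * X - d * b * c) / (d * G * X * Y)"
    by (rule pfa0) (use assms d0 in auto)
  also have "d * X * Y + c * G * Y - b * G * X - d * b * c = 0"
    unfolding hX hY d_def by (simp add: algebra_simps)
  finally show ?thesis by simp
qed

lemma pf3:
  fixes G g1 s \<beta> \<gamma> :: real
  assumes "G \<noteq> 0" "G \<noteq> \<beta>" "G \<noteq> \<gamma>" "\<beta> \<noteq> \<gamma>" "\<beta> \<noteq> 0" "\<gamma> \<noteq> 0" "s > 0"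
    and e: "s * g1 = 1 / (\<beta> * \<gamma>) * G * (G - \<beta>) * (G - \<gamma>)"
  shows "g1 / G + \<beta> * \<gamma> / (\<beta> * (\<beta> - \<gamma>)) * (- g1 / (\<beta> - G)) + \<beta> * \<gamma> / (\<gamma> * (\<gamma> - \<beta>)) * (g1 / (G - \<gamma>)) - 1 / s = 0"
proof -
  obtain X Y where hX: "X = G - \<beta>" and hY: "Y = G - \<gamma>" by blast
  have X0: "X \<noteq> 0" and Y0: "Y \<noteq> 0" using assms hX hY by auto
  have B: "\<beta> * \<gamma> / (\<beta> * (\<beta> - \<gamma>)) = \<gamma> / (\<beta> - \<gamma>)"
    using assms by (rule_tac mult_divide_mult_cancel_left) auto
  have C: "\<beta> * \<gamma> / (\<gamma> * (\<gamma> - \<beta>)) = \<beta> / (\<gamma> - \<beta>)"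
    using assms mult_divide_mult_cancel_left[of \<gamma> \<beta> "\<gamma> - \<beta>"] by (simp add: mult.commute)
  have m1: "- g1 / (\<beta> - G) = g1 * (1 / X)"
  proof -
    have "\<beta> - G = - X" unfolding hX by simp
    then show ?thesis by simp
  qed
  have m2: "g1 / (G - \<gamma>) = g1 * (1 / Y)" unfolding hY by simp
  have m3: "g1 / G = g1 * (1 / G)" by simp
  have "g1 / G + \<beta> * \<gamma> / (\<beta> * (\<beta> - \<gamma>)) * (- g1 / (\<beta> - G)) + \<beta> * \<gamma> / (\<gamma> * (\<gamma> - \<beta>)) * (g1 / (G - \<gamma>)) - 1 / s
     = g1 * (1 / G + \<gamma> / (\<beta> - \<gamma>) * (1 / X) + \<beta> / (\<gamma> - \<beta>) * (1 / Y)) - 1 / s"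
    unfolding B C m1 m2 m3 by (simp add: algebra_simps)
  also have "\<dots> = g1 * (\<beta> * \<gamma> / (G * X * Y)) - 1 / s"
    using pfa[OF _ X0 Y0 _ hX hY] assms by simp
  also have "\<dots> = 0"
  proof -
    have "g1 = 1 / (\<beta> * \<gamma>) * G * X * Y / s" using e assms unfolding hX[symmetric] hY[symmetric]
      by (simp add: field_simps)
    then show ?thesis using assms X0 Y0 by (simp add: field_simps)
  qed
  finally show ?thesis .
qed

lemma pf2:
  fixes G g1 s \<beta> :: real
  assumes "G \<noteq> 0" "G \<noteq> \<beta>" "\<beta> \<noteq> 0" "s > 0"
    and e: "s * g1 = 1 / \<beta>^2 * G * (G - \<beta>)^2"
  shows "g1 / G - (- g1 / (\<beta> - G)) - (- (\<beta> * g1) / (G - \<beta>)^2) - 1 / s = 0"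
proof -
  obtain X where hX: "X = G - \<beta>" by blast
  have X0: "X \<noteq> 0" using assms hX by auto
  have m1: "- g1 / (\<beta> - G) = g1 * (1 / X)"
  proof -
    have "\<beta> - G = - X" unfolding hX by simp
    then show ?thesis by simp
  qed
  have "g1 / G - (- g1 / (\<beta> - G)) - (- (\<beta> * g1) / (G - \<beta>)^2) - 1 / s
     = g1 * (1 / G - 1 / X + \<beta> / X^2) - 1 / s"
    unfolding m1 hX[symmetric] by (simp add: algebra_simps)
  also have "1 / G - 1 / X + \<beta> / X^2 = \<beta>^2 / (G * X^2)"
  proof -
    have "1 / G - 1 / X + \<beta> / X^2 - \<beta>^2 / (G * X^2) = (X^2 - G * X + \<beta> * G - \<beta>^2) / (G * X^2)"
      using assms X0 by (simp add: field_simps power2_eq_square)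
    also have "X^2 - G * X + \<beta> * G - \<beta>^2 = 0" unfolding hX by (simp add: algebra_simps power2_eq_square)
    finally show ?thesis by simp
  qed
  also have "g1 * (\<beta>^2 / (G * X^2)) - 1 / s = 0"
  proof -
    have "g1 = 1 / \<beta>^2 * G * X^2 / s" using e assms unfolding hX[symmetric]
      by (simp add: field_simps)
    then show ?thesis using assms X0 by (simp add: field_simps)
  qed
  finally show ?thesis .
qed

context
  fixes g g1 :: "real \<Rightarrow> real" and a b :: real
  assumes dg: "\<And>x. x \<ge> 0 \<Longrightarrow> (g has_real_derivative g1 x) (at x)"
    and pos: "\<And>x. x \<ge> 0 \<Longrightarrow> g1 x > 0"
    and g0: "g 0 = 0"
    and ode: "\<And>t. t > 0 \<Longrightarrow> t * g1 t = g t * (1 + a * g t + b * (g t)^2)"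
begin

lemma gpos: "t > 0 \<Longrightarrow> g t > 0"
proof -
  assume t: "t > 0"
  have "g 0 < g t"
    by (rule DERIV_pos_imp_increasing[OF t]) (use dg pos in auto)
  then show ?thesis by (simp add: g0)
qed

lemma qpos: "t > 0 \<Longrightarrow> 1 + a * g t + b * (g t)^2 > 0"
proof -
  assume t: "t > 0"
  have "t * g1 t > 0" using t pos[of t] by simp
  then have "g t * (1 + a * g t + b * (g t)^2) > 0" using ode[OF t] by simp
  then show ?thesis using gpos[OF t] by (simp add: zero_less_mult_iff)
qed

lemma below_root:
  assumes r: "r > 0" and qr: "1 + a * r + b * r^2 = 0" and s: "s \<ge> 0"
  shows "g s < r"
proof (rule ccontr)
  assume "\<not> g s < r"
  then have "g 0 \<le> r" "r \<le> g s" using g0 r by auto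
  moreover have "continuous_on {0..s} g"
    by (rule continuous_at_imp_continuous_on) (use dg DERIV_isCont in fastforce)
  ultimately obtain x where x: "0 \<le> x" "x \<le> s" "g x = r"
    using IVT'[of g 0 r s] s by auto
  have "x \<noteq> 0" using x g0 r by auto
  then have "x > 0" using x by simp
  then show False using qpos[of x] x qr by simp
qed

lemma const_log:
  fixes \<Phi> :: "real \<Rightarrow> real"
  assumes "\<And>t. t > 0 \<Longrightarrow> (\<Phi> has_real_derivative 0) (at t)"
  shows "\<exists>c. \<forall>s>0. \<Phi> s = c"
proof -
  have "\<Phi> s = \<Phi> 1" if s: "s > 0" for s
  proof -
    have c: "continuous_on {min s 1..max s 1} \<Phi>"
    proof (rule continuous_at_imp_continuous_on, rule ballI)
      fix x assume "x \<in> {min s 1..max s 1}"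
      then have "x > 0" using s by (auto simp: min_def split: if_splits)
      then show "isCont \<Phi> x" by (rule DERIV_isCont[OF assms])
    qed
    consider "s < 1" | "s = 1" | "s > 1" by linarith
    then show ?thesis
    proof cases
      case 1
      have "\<Phi> 1 = \<Phi> s" using DERIV_isconst2[of s 1 \<Phi> 1] c 1 assms s by (auto simp: min_def max_def)
      then show ?thesis by simp
    next
      case 3
      show ?thesis using DERIV_isconst2[of 1 s \<Phi> s] c 3 assms s by (auto simp: min_def max_def)
    qed simp
  qed
  then show ?thesis by blast
qed

lemma no_blowup:
  assumes eps: "\<epsilon> > 0" and q: "\<And>\<tau>. \<tau> \<ge> 0 \<Longrightarrow> 1 + a * \<tau> + b * \<tau>^2 \<ge> \<epsilon> * \<tau>^2"
  shows False
proof -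
  define \<Phi> where "\<Phi> s = - 1 / (2 * (g s)^2) - \<epsilon> * ln s" for s
  have g1p: "g 1 > 0" using gpos by simp
  define S where "S = exp (1 / (2 * \<epsilon> * (g 1)^2))"
  have S1: "S \<ge> 1" unfolding S_def using eps g1p by simp
  have "\<Phi> 1 \<le> \<Phi> S"
  proof (rule DERIV_nonneg_imp_nondecreasing[OF S1])
    fix x assume x: "1 \<le> x" "x \<le> S"
    then have x0: "x > 0" by simp
    have gx: "g x > 0" using gpos[OF x0] .
    have d: "(\<Phi> has_real_derivative (g1 x / (g x)^3 - \<epsilon> / x)) (at x)"
      unfolding \<Phi>_def[abs_def] using dg[of x] x0 gx
      by (auto intro!: derivative_eq_intros simp: field_simps power2_eq_square power3_eq_cube)
    have "x * g1 x \<ge> \<epsilon> * (g x)^3"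
    proof -
      have "x * g1 x = g x * (1 + a * g x + b * (g x)^2)" using ode[OF x0] .
      also have "\<dots> \<ge> g x * (\<epsilon> * (g x)^2)" using q[of "g x"] gx by (intro mult_left_mono) auto
      finally show ?thesis by (simp add: power2_eq_square power3_eq_cube mult_ac)
    qed
    then have "g1 x / (g x)^3 - \<epsilon> / x \<ge> 0" using x0 gx by (simp add: field_simps)
    then show "\<exists>y. (\<Phi> has_real_derivative y) (at x) \<and> 0 \<le> y" using d by blast
  qed
  then have "- 1 / (2 * (g 1)^2) \<le> - 1 / (2 * (g S)^2) - \<epsilon> * ln S" unfolding \<Phi>_def by simp
  moreover have "\<epsilon> * ln S = 1 / (2 * (g 1)^2)" unfolding S_def using eps by simp
  moreover have "1 / (2 * (g S)^2) > 0" using gpos[of S] S1 by simp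
  ultimately show False by linarith
qed

lemma case_neg:
  assumes bn: "b < 0"
  shows "\<exists>\<gamma> \<beta> c. \<gamma> < 0 \<and> 0 < \<beta>
         \<and> (\<forall>s>0. 0 < g s \<and> g s < \<beta>
               \<and> s * g1 s = 1 / (\<beta> * \<gamma>) * g s * (g s - \<beta>) * (g s - \<gamma>)
               \<and> ln (g s) + \<beta> * \<gamma> / (\<beta> * (\<beta> - \<gamma>)) * ln (\<beta> - g s)
                   + \<beta> * \<gamma> / (\<gamma> * (\<gamma> - \<beta>)) * ln (g s - \<gamma>) = ln s + c)"
proof -
  define d where "d = a^2 - 4 * b"
  define sq where "sq = sqrt d"
  have d0: "d > a^2" unfolding d_def using bn by simp
  then have dpos: "d > 0" by (smt (verit) zero_le_power2)
  have sq2: "sq^2 = d" unfolding sq_def using dpos by simp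
  have sqa: "sq > \<bar>a\<bar>" unfolding sq_def using d0 real_sqrt_abs real_sqrt_less_mono by metis
  define \<beta> where "\<beta> = (- a - sq) / (2 * b)"
  define \<gamma> where "\<gamma> = (- a + sq) / (2 * b)"
  have bp: "\<beta> > 0" unfolding \<beta>_def using sqa bn by (intro divide_neg_neg) auto
  have gn: "\<gamma> < 0" unfolding \<gamma>_def using sqa bn by (intro divide_pos_neg) auto
  have bg: "\<beta> * \<gamma> = 1 / b"
  proof -
    have "\<beta> * \<gamma> = (a^2 - sq^2) / (4 * b^2)" unfolding \<beta>_def \<gamma>_def
      by (simp add: field_simps power2_eq_square)
    also have "\<dots> = 1 / b" unfolding sq2 d_def using bn by (simp add: field_simps power2_eq_square)
    finally show ?thesis .
  qed
  have bpg: "\<beta> + \<gamma> = - a / b" unfolding \<beta>_def \<gamma>_def using bn by (simp add: field_simps)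
  have qid: "1 + a * \<tau> + b * \<tau>^2 = 1 / (\<beta> * \<gamma>) * (\<tau> - \<beta>) * (\<tau> - \<gamma>)" for \<tau>
  proof -
    have "1 / (\<beta> * \<gamma>) * (\<tau> - \<beta>) * (\<tau> - \<gamma>) = b * (\<tau>^2 - (\<beta> + \<gamma>) * \<tau> + \<beta> * \<gamma>)"
    proof -
      have ib: "1 / (\<beta> * \<gamma>) = b" using bg bn by simp
      show ?thesis by (simp only: ib) (simp add: algebra_simps power2_eq_square)
    qed
    also have "\<dots> = 1 + a * \<tau> + b * \<tau>^2" unfolding bpg bg using bn by (simp add: field_simps)
    finally show ?thesis by simp
  qed
  have below: "g s < \<beta>" if "s \<ge> 0" for s
    by (rule below_root[OF bp _ that]) (simp add: qid)
  have bneg: "\<beta> \<noteq> \<gamma>" using bp gn by simp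
  let ?B = "\<beta> * \<gamma> / (\<beta> * (\<beta> - \<gamma>))" and ?C = "\<beta> * \<gamma> / (\<gamma> * (\<gamma> - \<beta>))"
  define \<Phi> where "\<Phi> s = ln (g s) + ?B * ln (\<beta> - g s) + ?C * ln (g s - \<gamma>) - ln s" for s
  have ode3: "s * g1 s = 1 / (\<beta> * \<gamma>) * g s * (g s - \<beta>) * (g s - \<gamma>)" if "s > 0" for s
    using ode[OF that] qid[of "g s"] by simp
  have "(\<Phi> has_real_derivative 0) (at s)" if s: "s > 0" for s
  proof -
    have gs: "g s > 0" "g s < \<beta>" using gpos[OF s] below[of s] s by auto
    have "(\<Phi> has_real_derivative (g1 s / g s + ?B * (- g1 s / (\<beta> - g s)) + ?C * (g1 s / (g s - \<gamma>)) - 1 / s)) (at s)"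
      unfolding \<Phi>_def[abs_def] using dg[of s] s gs gn
      by (auto intro!: derivative_eq_intros simp: mult_ac)
    moreover have "g1 s / g s + ?B * (- g1 s / (\<beta> - g s)) + ?C * (g1 s / (g s - \<gamma>)) - 1 / s = 0"
      by (rule pf3) (use gs gn bp ode3[OF s] s in auto)
    ultimately show ?thesis by simp
  qed
  then obtain c where c: "\<forall>s>0. \<Phi> s = c" using const_log by blast
  show ?thesis
  proof (intro exI conjI allI impI)
    fix s :: real assume s: "s > 0"
    show "0 < g s" "g s < \<beta>" using gpos[OF s] below[of s] s by auto
    show "s * g1 s = 1 / (\<beta> * \<gamma>) * g s * (g s - \<beta>) * (g s - \<gamma>)" by (rule ode3[OF s])
    show "ln (g s) + ?B * ln (\<beta> - g s) + ?C * ln (g s - \<gamma>) = ln s + c"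
      using c s unfolding \<Phi>_def by (simp add: algebra_simps)
  qed (use gn bp in auto)
qed

lemma case_two:
  assumes bp0: "b > 0" and an: "a < 0" and dpos: "a^2 - 4 * b > 0"
  shows "\<exists>\<gamma> \<beta> c. 0 < \<beta> \<and> \<beta> < \<gamma>
         \<and> (\<forall>s>0. 0 < g s \<and> g s < \<beta>
               \<and> s * g1 s = 1 / (\<beta> * \<gamma>) * g s * (g s - \<beta>) * (g s - \<gamma>)
               \<and> ln (g s) + \<beta> * \<gamma> / (\<beta> * (\<beta> - \<gamma>)) * ln (\<beta> - g s)
                   + \<beta> * \<gamma> / (\<gamma> * (\<gamma> - \<beta>)) * ln (\<gamma> - g s) = ln s + c)"
proof -
  define d where "d = a^2 - 4 * b"
  define sq where "sq = sqrt d"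
  have d0: "d < a^2" unfolding d_def using bp0 by simp
  have dpos: "d > 0" using dpos unfolding d_def .
  have sq2: "sq^2 = d" unfolding sq_def using dpos by simp
  have sqa: "sq < - a" unfolding sq_def using d0 an real_sqrt_abs real_sqrt_less_mono
    by (metis abs_of_neg)
  have sqp: "sq > 0" unfolding sq_def using dpos by simp
  define \<beta> where "\<beta> = (- a - sq) / (2 * b)"
  define \<gamma> where "\<gamma> = (- a + sq) / (2 * b)"
  have bp: "\<beta> > 0" unfolding \<beta>_def using sqa bp0 by (intro divide_pos_pos) auto
  have bg_lt: "\<beta> < \<gamma>" unfolding \<beta>_def \<gamma>_def using sqp bp0 by (simp add: divide_strict_right_mono)
  have bg: "\<beta> * \<gamma> = 1 / b"
  proof -
    have "\<beta> * \<gamma> = (a^2 - sq^2) / (4 * b^2)" unfolding \<beta>_def \<gamma>_def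
      by (simp add: field_simps power2_eq_square)
    also have "\<dots> = 1 / b" unfolding sq2 d_def using bp0 by (simp add: field_simps power2_eq_square)
    finally show ?thesis .
  qed
  have bpg: "\<beta> + \<gamma> = - a / b" unfolding \<beta>_def \<gamma>_def using bp0 by (simp add: field_simps)
  have qid: "1 + a * \<tau> + b * \<tau>^2 = 1 / (\<beta> * \<gamma>) * (\<tau> - \<beta>) * (\<tau> - \<gamma>)" for \<tau>
  proof -
    have "1 / (\<beta> * \<gamma>) * (\<tau> - \<beta>) * (\<tau> - \<gamma>) = b * (\<tau>^2 - (\<beta> + \<gamma>) * \<tau> + \<beta> * \<gamma>)"
    proof -
      have ib: "1 / (\<beta> * \<gamma>) = b" using bg bp0 by simp
      show ?thesis by (simp only: ib) (simp add: algebra_simps power2_eq_square)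
    qed
    also have "\<dots> = 1 + a * \<tau> + b * \<tau>^2" unfolding bpg bg using bp0 by (simp add: field_simps)
    finally show ?thesis by simp
  qed
  have below: "g s < \<beta>" if "s \<ge> 0" for s
    by (rule below_root[OF bp _ that]) (simp add: qid)
  let ?B = "\<beta> * \<gamma> / (\<beta> * (\<beta> - \<gamma>))" and ?C = "\<beta> * \<gamma> / (\<gamma> * (\<gamma> - \<beta>))"
  define \<Phi> where "\<Phi> s = ln (g s) + ?B * ln (\<beta> - g s) + ?C * ln (\<gamma> - g s) - ln s" for s
  have ode3: "s * g1 s = 1 / (\<beta> * \<gamma>) * g s * (g s - \<beta>) * (g s - \<gamma>)" if "s > 0" for s
    using ode[OF that] qid[of "g s"] by simp
  have "(\<Phi> has_real_derivative 0) (at s)" if s: "s > 0" for s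
  proof -
    have gs: "g s > 0" "g s < \<beta>" using gpos[OF s] below[of s] s by auto
    have D: "(\<Phi> has_real_derivative (g1 s / g s + ?B * (- g1 s / (\<beta> - g s)) + ?C * (- g1 s / (\<gamma> - g s)) - 1 / s)) (at s)"
      unfolding \<Phi>_def[abs_def] using dg[of s] s gs bg_lt
      by (auto intro!: derivative_eq_intros simp: mult_ac)
    have M: "- g1 s / (\<gamma> - g s) = g1 s / (g s - \<gamma>)"
    proof -
      have n: "\<gamma> - g s \<noteq> 0" "g s - \<gamma> \<noteq> 0" using gs bg_lt by auto
      then show ?thesis by (simp add: field_simps)
    qed
    have Z: "g1 s / g s + ?B * (- g1 s / (\<beta> - g s)) + ?C * (g1 s / (g s - \<gamma>)) - 1 / s = 0"
      by (rule pf3) (use gs bg_lt bp ode3[OF s] s in auto)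
    show ?thesis using D unfolding M Z .
  qed
  then obtain c where c: "\<forall>s>0. \<Phi> s = c" using const_log by blast
  show ?thesis
  proof (intro exI conjI allI impI)
    fix s :: real assume s: "s > 0"
    show "0 < g s" "g s < \<beta>" using gpos[OF s] below[of s] s by auto
    show "s * g1 s = 1 / (\<beta> * \<gamma>) * g s * (g s - \<beta>) * (g s - \<gamma>)" by (rule ode3[OF s])
    show "ln (g s) + ?B * ln (\<beta> - g s) + ?C * ln (\<gamma> - g s) = ln s + c"
      using c s unfolding \<Phi>_def by (simp add: algebra_simps)
  qed (use bg_lt bp in auto)
qed

lemma case_double:
  assumes bp0: "b > 0" and an: "a < 0" and d0: "a^2 - 4 * b = 0"
  shows "\<exists>\<beta> c. \<beta> > 0 \<and> a = - 2 / \<beta> \<and> b = 1 / \<beta>^2 \<and> (\<forall>s\<ge>0. g s < \<beta>)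
         \<and> (\<forall>s>0. 0 < g s \<and> g s < \<beta>
               \<and> s * g1 s = 1 / \<beta>\<^sup>2 * g s * (g s - \<beta>)\<^sup>2
               \<and> ln (g s) - ln (\<beta> - g s) - \<beta> / (g s - \<beta>) = ln s + c)"
proof -
  define \<beta> where "\<beta> = - 2 / a"
  have bp: "\<beta> > 0" unfolding \<beta>_def using an by simp
  have ea: "a = - 2 / \<beta>" unfolding \<beta>_def using an by simp
  have eb: "b = 1 / \<beta>^2" unfolding \<beta>_def using d0 an by (simp add: field_simps power2_eq_square)
  have qid: "1 + a * \<tau> + b * \<tau>^2 = 1 / \<beta>^2 * (\<tau> - \<beta>)^2" for \<tau>
    unfolding ea eb using bp by (simp add: field_simps power2_eq_square)
  have below: "g s < \<beta>" if "s \<ge> 0" for s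
    by (rule below_root[OF bp _ that]) (simp add: qid)
  define \<Phi> where "\<Phi> s = ln (g s) - ln (\<beta> - g s) - \<beta> / (g s - \<beta>) - ln s" for s
  have ode2: "s * g1 s = 1 / \<beta>\<^sup>2 * g s * (g s - \<beta>)\<^sup>2" if "s > 0" for s
    using ode[OF that] qid[of "g s"] by simp
  have "(\<Phi> has_real_derivative 0) (at s)" if s: "s > 0" for s
  proof -
    have gs: "g s > 0" "g s < \<beta>" using gpos[OF s] below[of s] s by auto
    have "(\<Phi> has_real_derivative (g1 s / g s - (- g1 s / (\<beta> - g s)) - (- (\<beta> * g1 s) / (g s - \<beta>)^2) - 1 / s)) (at s)"
      unfolding \<Phi>_def[abs_def] using dg[of s] s gs
      by (auto intro!: derivative_eq_intros simp: mult_ac power2_eq_square)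
    moreover have "g1 s / g s - (- g1 s / (\<beta> - g s)) - (- (\<beta> * g1 s) / (g s - \<beta>)^2) - 1 / s = 0"
      by (rule pf2) (use gs bp ode2[OF s] s in auto)
    ultimately show ?thesis by simp
  qed
  then obtain c where c: "\<forall>s>0. \<Phi> s = c" using const_log by blast
  show ?thesis
  proof (intro exI conjI allI impI)
    fix s :: real assume s: "s > 0"
    show "0 < g s" "g s < \<beta>" using gpos[OF s] below[of s] s by auto
    show "s * g1 s = 1 / \<beta>\<^sup>2 * g s * (g s - \<beta>)\<^sup>2" by (rule ode2[OF s])
    show "ln (g s) - ln (\<beta> - g s) - \<beta> / (g s - \<beta>) = ln s + c"
      using c s unfolding \<Phi>_def by (simp add: algebra_simps)
  qed (use bp ea eb below in auto)
qed

lemma classify: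
  assumes b0: "b \<noteq> 0"
  shows "(\<exists>\<beta> c. \<beta> > 0 \<and> a = - 2 / \<beta> \<and> b = 1 / \<beta>^2 \<and> (\<forall>s\<ge>0. g s < \<beta>)
         \<and> (\<forall>s>0. 0 < g s \<and> g s < \<beta>
               \<and> s * g1 s = 1 / \<beta>\<^sup>2 * g s * (g s - \<beta>)\<^sup>2
               \<and> ln (g s) - ln (\<beta> - g s) - \<beta> / (g s - \<beta>) = ln s + c))
    \<or> (\<exists>\<gamma> \<beta> c. \<gamma> < 0 \<and> 0 < \<beta>
         \<and> (\<forall>s>0. 0 < g s \<and> g s < \<beta>
               \<and> s * g1 s = 1 / (\<beta> * \<gamma>) * g s * (g s - \<beta>) * (g s - \<gamma>)
               \<and> ln (g s) + \<beta> * \<gamma> / (\<beta> * (\<beta> - \<gamma>)) * ln (\<beta> - g s)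
                   + \<beta> * \<gamma> / (\<gamma> * (\<gamma> - \<beta>)) * ln (g s - \<gamma>) = ln s + c))
    \<or> (\<exists>\<gamma> \<beta> c. 0 < \<beta> \<and> \<beta> < \<gamma>
         \<and> (\<forall>s>0. 0 < g s \<and> g s < \<beta>
               \<and> s * g1 s = 1 / (\<beta> * \<gamma>) * g s * (g s - \<beta>) * (g s - \<gamma>)
               \<and> ln (g s) + \<beta> * \<gamma> / (\<beta> * (\<beta> - \<gamma>)) * ln (\<beta> - g s)
                   + \<beta> * \<gamma> / (\<gamma> * (\<gamma> - \<beta>)) * ln (\<gamma> - g s) = ln s + c))"
proof (cases "b < 0")
  case True
  then show ?thesis using case_neg by blast
next
  case False
  then have bp: "b > 0" using b0 by simp
  show ?thesis
  proof (cases "a < 0")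
    case an: True
    consider "a^2 - 4 * b > 0" | "a^2 - 4 * b = 0" | "a^2 - 4 * b < 0" by linarith
    then show ?thesis
    proof cases
      case 1 then show ?thesis using case_two[OF bp an] by blast
    next
      case 2 then show ?thesis using case_double[OF bp an] by blast
    next
      case 3
      have False
      proof (rule no_blowup[of "b - a^2 / 4"])
        show "b - a^2 / 4 > 0" using 3 by simp
        fix \<tau> :: real assume "\<tau> \<ge> 0"
        have "1 + a * \<tau> + b * \<tau>^2 - (b - a^2 / 4) * \<tau>^2 = (1 + a * \<tau> / 2)^2"
          by (simp add: algebra_simps power2_eq_square)
        then show "1 + a * \<tau> + b * \<tau>^2 \<ge> (b - a^2 / 4) * \<tau>^2"
          by (smt (verit) zero_le_power2)
      qed
      then show ?thesis ..
    qed
  next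
    case False
    have "False"
    proof (rule no_blowup[of b])
      show "b > 0" by (rule bp)
      fix \<tau> :: real assume "\<tau> \<ge> 0"
      then have "a * \<tau> \<ge> 0" using False by simp
      then show "1 + a * \<tau> + b * \<tau>^2 \<ge> b * \<tau>^2" by simp
    qed
    then show ?thesis ..
  qed
qed

end


lemma scal_sum:
  fixes z :: "complex^'n" and A B d L1 L2 :: complex
  assumes sg: "(\<Sum>l\<in>UNIV. cnj (z$l) * z$l) = \<sigma>" and A0: "A \<noteq> 0" and d0: "d \<noteq> 0"
  shows "(\<Sum>j\<in>UNIV. \<Sum>k\<in>UNIV. (((if k = j then 1 else 0) - B * cnj (z$k) * z$j / d) / A)
             * (- (L2 * cnj (z$j) * z$k + (if j = k then L1 else 0))))
     = - (L2 * \<sigma> + of_nat CARD('n) * L1 - B * (L2 * \<sigma> * \<sigma> + L1 * \<sigma>) / d) / A"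
proof -
  let ?c1 = "- L2 / A + B * L1 / (d * A) + B * L2 * \<sigma> / (d * A)"
  let ?c0 = "- L1 / A"
  have inner: "(\<Sum>k\<in>UNIV. (((if k = j then 1 else 0) - B * cnj (z$k) * z$j / d) / A)
             * (- (L2 * cnj (z$j) * z$k + (if j = k then L1 else 0))))
        = ?c1 * (cnj (z$j) * z$j) + ?c0" for j
  proof -
    have pt: "(((if k = j then 1 else 0) - B * cnj (z$k) * z$j / d) / A)
             * (- (L2 * cnj (z$j) * z$k + (if j = k then L1 else 0)))
        = (if k = j then - (L2 * cnj (z$j) * z$j) / A - L1 / A + B * cnj (z$j) * z$j * L1 / (d * A) else 0)
          + (B * L2 * z$j * cnj (z$j) / (d * A)) * (cnj (z$k) * z$k)" for k
      using A0 d0 by (cases "k = j") (auto simp: field_simps)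
    have "(\<Sum>k\<in>UNIV. (((if k = j then 1 else 0) - B * cnj (z$k) * z$j / d) / A)
             * (- (L2 * cnj (z$j) * z$k + (if j = k then L1 else 0))))
       = (- (L2 * cnj (z$j) * z$j) / A - L1 / A + B * cnj (z$j) * z$j * L1 / (d * A))
          + (B * L2 * z$j * cnj (z$j) / (d * A)) * \<sigma>"
      by (simp only: pt sum.distrib sum_distrib_left[symmetric] sg) simp
    also have "\<dots> = ?c1 * (cnj (z$j) * z$j) + ?c0"
      by (simp add: algebra_simps)
    finally show ?thesis .
  qed
  have "(\<Sum>j\<in>UNIV. \<Sum>k\<in>UNIV. (((if k = j then 1 else 0) - B * cnj (z$k) * z$j / d) / A)
             * (- (L2 * cnj (z$j) * z$k + (if j = k then L1 else 0))))
      = ?c1 * \<sigma> + of_nat CARD('n) * ?c0"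
    by (simp only: inner sum.distrib sum_distrib_left[symmetric] sg) simp
  also have "\<dots> = - (L2 * \<sigma> + of_nat CARD('n) * L1 - B * (L2 * \<sigma> * \<sigma> + L1 * \<sigma>) / d) / A"
    using A0 d0 by (simp add: field_simps)
  finally show ?thesis .
qed

lemma sum_cnj:
  fixes z :: "complex^'n"
  shows "(\<Sum>l\<in>UNIV. cnj (z$l) * z$l) = complex_of_real ((norm z)^2)"
proof -
  have "(norm z)^2 = (\<Sum>l\<in>UNIV. (cmod (z$l))^2)"
    unfolding norm_vec_def L2_set_def by (simp add: sum_nonneg)
  then have "complex_of_real ((norm z)^2) = (\<Sum>l\<in>UNIV. complex_of_real ((cmod (z$l))^2))"
    by simp
  also have "\<dots> = (\<Sum>l\<in>UNIV. cnj (z$l) * z$l)"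
    by (rule sum.cong) (auto simp del: of_real_power simp: complex_norm_square mult.commute)
  finally show ?thesis by simp
qed


declare One_nat_def[simp del]

lemma kmetric_rk:
  fixes z :: "complex^'n"
  shows "kmetric u z = (\<chi> i j. (if i = j then complex_of_real (D u 1 ((norm z)^2)) else 0)
     + (\<chi> i. complex_of_real (D u 2 ((norm z)^2)) * cnj (z$i))$i * z$j)"
  unfolding kmetric_def D1 D2 by simp

lemma sum_xy:
  fixes z :: "complex^'n"
  shows "(\<Sum>l\<in>UNIV. (\<chi> i. complex_of_real c * cnj (z$i))$l * z$l) = complex_of_real (c * (norm z)^2)"
    and "(\<Sum>l\<in>UNIV. z$l * (\<chi> i. complex_of_real c * cnj (z$i))$l) = complex_of_real (c * (norm z)^2)"
proof -
  have "(\<Sum>l\<in>UNIV. (\<chi> i. complex_of_real c * cnj (z$i))$l * z$l) = complex_of_real c * (\<Sum>l\<in>UNIV. cnj (z$l) * z$l)"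
    by (simp add: sum_distrib_left mult.assoc)
  then show "(\<Sum>l\<in>UNIV. (\<chi> i. complex_of_real c * cnj (z$i))$l * z$l) = complex_of_real (c * (norm z)^2)"
    by (simp add: sum_cnj)
  then show "(\<Sum>l\<in>UNIV. z$l * (\<chi> i. complex_of_real c * cnj (z$i))$l) = complex_of_real (c * (norm z)^2)"
    by (simp add: mult.commute)
qed

lemma det_k:
  fixes z :: "complex^'n"
  assumes gd: "good u"
  shows "det (kmetric u z) = complex_of_real (D u 1 ((norm z)^2) ^ (CARD('n) - 1) * G1 u ((norm z)^2))"
proof -
  have "D u 1 ((norm z)^2) > 0" using pD1[OF gd] by simp
  then have a0: "complex_of_real (D u 1 ((norm z)^2)) \<noteq> 0" by simp
  have e2: "complex_of_real (D u 1 ((norm z)^2)) + complex_of_real (D u 2 ((norm z)^2) * (norm z)^2)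
     = complex_of_real (G1 u ((norm z)^2))"
    unfolding G1_def by (simp only: of_real_add mult.commute)
  show ?thesis
    unfolding kmetric_rk det_rk[OF a0] sum_xy e2 by (simp only: of_real_mult of_real_power)
qed

lemma logdet_eq:
  fixes z :: "complex^'n"
  assumes gd: "good u"
  shows "logdet u z = complex_of_real (LL CARD('n) u ((norm z)^2))"
proof -
  let ?s = "(norm z)^2"
  have p1: "D u 1 ?s > 0" using pD1[OF gd] by simp
  have p2: "G1 u ?s > 0" using pG1[OF gd] by simp
  have "ln (norm (det (kmetric u z))) = ln (D u 1 ?s ^ (CARD('n) - 1) * G1 u ?s)"
    using p1 p2 by (simp add: det_k[OF gd] norm_mult norm_power)
  also have "\<dots> = real (CARD('n) - 1) * ln (D u 1 ?s) + ln (G1 u ?s)"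
    using p1 p2 by (simp add: ln_mult ln_realpow)
  finally show ?thesis unfolding logdet_def LL_def by simp
qed

lemma inv_k:
  fixes z :: "complex^'n"
  assumes gd: "good u"
  shows "matrix_inv (kmetric u z) = (\<chi> i j. ((if i = j then 1 else 0)
     - complex_of_real (D u 2 ((norm z)^2)) * cnj (z$i) * z$j / complex_of_real (G1 u ((norm z)^2)))
       / complex_of_real (D u 1 ((norm z)^2)))"
proof -
  let ?s = "(norm z)^2"
  have p1: "D u 1 ?s > 0" using pD1[OF gd] by simp
  have p2: "G1 u ?s > 0" using pG1[OF gd] by simp
  have a0: "complex_of_real (D u 1 ?s) \<noteq> 0" using p1 by simp
  have e: "complex_of_real (D u 1 ?s) + (\<Sum>l\<in>UNIV. z$l * (\<chi> i. complex_of_real (D u 2 ?s) * cnj (z$i))$l)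
      = complex_of_real (G1 u ?s)"
    unfolding sum_xy G1_def by (simp only: of_real_add mult.commute)
  have d0: "complex_of_real (D u 1 ?s) + (\<Sum>l\<in>UNIV. z$l * (\<chi> i. complex_of_real (D u 2 ?s) * cnj (z$i))$l) \<noteq> 0"
    unfolding e using p2 by simp
  show ?thesis
    unfolding kmetric_rk inv_rk[OF a0 d0] e by simp
qed

lemma wirtbar_logdet:
  assumes gd: "good u"
  shows "wirtbar (logdet u :: complex^'n \<Rightarrow> complex) k
     = (\<lambda>w. complex_of_real (L1 CARD('n) u ((norm w)^2)) * w$k)"
proof
  fix w :: "complex^'n"
  have "logdet u = (\<lambda>w::complex^'n. complex_of_real (LL CARD('n) u ((norm w)^2)))"
    using logdet_eq[OF gd] by blast
  then show "wirtbar (logdet u) k w = complex_of_real (L1 CARD('n) u ((norm w)^2)) * w$k"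
    using wirtbar_F[OF dLL[OF gd, of "(norm w)^2"]] by simp
qed

lemma ricci_eq:
  fixes z :: "complex^'n"
  assumes gd: "good u"
  shows "ricci u j k z = - (complex_of_real (L2 CARD('n) u ((norm z)^2)) * cnj (z$j) * z$k
      + (if j = k then complex_of_real (L1 CARD('n) u ((norm z)^2)) else 0))"
  unfolding ricci_def wirtbar_logdet[OF gd]
  using wirt_FNk[OF dL1[OF gd, of "(norm z)^2"]] by simp

lemma RS_alg:
  fixes a b s l1 l2 n :: real
  assumes "a > 0" "a + s * b > 0"
  shows "- (l2 * s + n * l1 - b * (l2 * s * s + l1 * s) / (a + s * b)) / a
     = - (n - 1) * l1 / a - (l1 + s * l2) / (a + s * b)"
proof -
  have d: "a + s * b \<noteq> 0" "a \<noteq> 0" using assms by auto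
  have d2: "a * a + a * (b * s) \<noteq> 0"
    using d by (metis distrib_left mult.commute no_zero_divisors)
  show ?thesis using d d2 by (simp add: field_simps)
qed

lemma scal_eq:
  fixes z :: "complex^'n"
  assumes gd: "good u"
  shows "scal u z = RS CARD('n) u ((norm z)^2)"
proof -
  let ?s = "(norm z)^2"
  let ?n = "CARD('n)"
  have p1: "D u 1 ?s > 0" using pD1[OF gd] by simp
  have p2: "G1 u ?s > 0" using pG1[OF gd] by simp
  have "(\<Sum>j\<in>UNIV. \<Sum>k\<in>UNIV. matrix_inv (kmetric u z) $ k $ j * ricci u j k z)
     = - (complex_of_real (L2 ?n u ?s) * complex_of_real ?s + of_nat ?n * complex_of_real (L1 ?n u ?s)
          - complex_of_real (D u 2 ?s) * (complex_of_real (L2 ?n u ?s) * complex_of_real ?s * complex_of_real ?s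
             + complex_of_real (L1 ?n u ?s) * complex_of_real ?s) / complex_of_real (G1 u ?s))
          / complex_of_real (D u 1 ?s)"
    unfolding inv_k[OF gd] ricci_eq[OF gd] vec_lambda_beta
    by (rule scal_sum[OF sum_cnj]) (use p1 p2 in auto)
  also have "\<dots> = complex_of_real (- (L2 ?n u ?s * ?s + real ?n * L1 ?n u ?s
          - D u 2 ?s * (L2 ?n u ?s * ?s * ?s + L1 ?n u ?s * ?s) / G1 u ?s) / D u 1 ?s)"
    by simp
  finally have "scal u z = - (L2 ?n u ?s * ?s + real ?n * L1 ?n u ?s
          - D u 2 ?s * (L2 ?n u ?s * ?s * ?s + L1 ?n u ?s * ?s) / G1 u ?s) / D u 1 ?s"
    unfolding scal_def by simp
  also have "\<dots> = RS ?n u ?s"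
  proof -
    have "?n \<ge> 1" using card_gt_0_iff[of "UNIV::'n set"] by (simp add: One_nat_def Suc_le_eq)
    then have n1: "real (?n - 1) = real ?n - 1" by (simp add: of_nat_diff)
    show ?thesis unfolding RS_def n1 G1_def using RS_alg p1 p2 unfolding G1_def by simp
  qed
  finally show ?thesis .
qed


lemma scal_fun:
  assumes gd: "good u"
  shows "(\<lambda>w::complex^'n. complex_of_real (scal u w)) = (\<lambda>w. complex_of_real (RS CARD('n) u ((norm w)^2)))"
  by (rule ext) (simp add: scal_eq[OF gd])

lemma wirtbar_scal:
  fixes z :: "complex^'n"
  assumes gd: "good u"
  shows "wirtbar (\<lambda>w. complex_of_real (scal u w)) b z = complex_of_real (deriv (RS CARD('n) u) ((norm z)^2)) * z$b"
proof -
  have "(RS CARD('n) u has_real_derivative deriv (RS CARD('n) u) ((norm z)^2)) (at ((norm z)^2))"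
    using RS_diff[OF gd, of "(norm z)^2"] by (simp add: DERIV_deriv_iff_real_differentiable)
  then show ?thesis unfolding scal_fun[OF gd] by (rule wirtbar_F)
qed

lemma grad_sum:
  fixes z :: "complex^'n" and A B d R :: complex
  assumes sg: "(\<Sum>l\<in>UNIV. cnj (z$l) * z$l) = \<sigma>" and A0: "A \<noteq> 0" and d0: "d \<noteq> 0" and dd: "d = A + B * \<sigma>"
  shows "(\<Sum>b\<in>UNIV. (((if b = a then 1 else 0) - B * cnj (z$b) * z$a / d) / A) * (R * z$b)) = R / d * z$a"
proof -
  have pt: "(((if b = a then 1 else 0) - B * cnj (z$b) * z$a / d) / A) * (R * z$b)
     = (if b = a then R * z$a / A else 0) - (B * R * z$a / (d * A)) * (cnj (z$b) * z$b)" for b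
    using A0 d0 by (cases "b = a") (auto simp: field_simps)
  have "(\<Sum>b\<in>UNIV. (((if b = a then 1 else 0) - B * cnj (z$b) * z$a / d) / A) * (R * z$b))
      = R * z$a / A - (B * R * z$a / (d * A)) * \<sigma>"
    by (simp only: pt sum_subtractf sum_distrib_left[symmetric] sg) simp
  also have "\<dots> = R / d * z$a"
  proof -
    have d2: "A * A + A * (B * \<sigma>) \<noteq> 0" using A0 d0 unfolding dd
      by (metis distrib_left no_zero_divisors)
    show ?thesis using A0 d0 d2 unfolding dd by (simp add: field_simps)
  qed
  finally show ?thesis .
qed

lemma grad10_eq:
  fixes z :: "complex^'n"
  assumes gd: "good u"
  shows "grad10 u z $ a = complex_of_real (deriv (RS CARD('n) u) ((norm z)^2) / G1 u ((norm z)^2)) * z$a"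
proof -
  let ?s = "(norm z)^2"
  have p1: "D u 1 ?s > 0" using pD1[OF gd] by simp
  have p2: "G1 u ?s > 0" using pG1[OF gd] by simp
  have dd: "complex_of_real (G1 u ?s) = complex_of_real (D u 1 ?s) + complex_of_real (D u 2 ?s) * complex_of_real ?s"
    unfolding G1_def by (simp only: of_real_add of_real_mult mult.commute)
  show ?thesis
    unfolding grad10_def vec_lambda_beta inv_k[OF gd] wirtbar_scal[OF gd]
    by (subst grad_sum[OF sum_cnj _ _ dd]) (use p1 p2 in auto)
qed

lemma N_axis:
  fixes r :: real
  shows "(norm (r *\<^sub>R axis a (1::complex) :: complex^'n))^2 = r^2"
proof -
  have ax: "(r *\<^sub>R axis a (1::complex) :: complex^'n)$l = (if l = a then complex_of_real r else 0)" for l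
    by (simp add: vector_scaleR_component axis_def scaleR_conv_of_real[where 'a=complex])
  have "complex_of_real ((norm (r *\<^sub>R axis a (1::complex) :: complex^'n))^2)
     = (\<Sum>l\<in>UNIV. cnj ((r *\<^sub>R axis a (1::complex) :: complex^'n)$l) * (r *\<^sub>R axis a (1::complex) :: complex^'n)$l)"
    by (rule sum_cnj[symmetric])
  also have "\<dots> = (\<Sum>l\<in>UNIV. if l = a then complex_of_real (r^2) else 0)"
    unfolding ax by (rule sum.cong) (auto simp: power2_eq_square)
  also have "\<dots> = complex_of_real (r^2)" by simp
  finally show ?thesis using of_real_eq_iff by blast
qed


lemma const_pos:
  fixes H :: "real \<Rightarrow> real"
  assumes d: "\<And>t. t > 0 \<Longrightarrow> (H has_real_derivative 0) (at t)" and t: "t > 0"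
  shows "H t = H 1"
proof -
  have c: "continuous_on {min t 1..max t 1} H"
  proof (rule continuous_at_imp_continuous_on, rule ballI)
    fix x assume "x \<in> {min t 1..max t 1}"
    then have "x > 0" using t by (auto simp: min_def split: if_splits)
    then show "isCont H x" by (rule DERIV_isCont[OF d])
  qed
  consider "t < 1" | "t = 1" | "t > 1" by linarith
  then show ?thesis
  proof cases
    case 1
    have "H 1 = H t" using DERIV_isconst2[of t 1 H 1] c 1 d t by (auto simp: min_def max_def)
    then show ?thesis by simp
  next
    case 3
    show ?thesis using DERIV_isconst2[of 1 t H t] c 3 d t by (auto simp: min_def max_def)
  qed simp
qed

lemma H_const:
  fixes u :: "real \<Rightarrow> real"
  assumes gd: "good u" and ex: "extremal u TYPE('n::finite)"
  shows "\<exists>K. \<forall>t>0. deriv (RS CARD('n) u) t = K * G1 u t"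
proof -
  define H where "H t = deriv (RS CARD('n) u) t / G1 u t" for t
  define V where "V = (grad10 u :: complex^'n \<Rightarrow> complex^'n)"
  have hol: "holomorphic_field V" using ex unfolding extremal_def V_def by simp
  have hV: "V w $ a = complex_of_real (H ((norm w)^2)) * w$a" for w a
    unfolding V_def H_def by (rule grad10_eq[OF gd])
  obtain a :: 'n where True by blast
  define v where "v = (axis a (1::complex) :: complex^'n)"
  define c where "c t = sqrt t *\<^sub>R v" for t
  have Nc: "(norm (c t))^2 = t" if "t \<ge> 0" for t
    unfolding c_def v_def N_axis using that by simp
  have ca: "c t $ a = complex_of_real (sqrt t)" for t
    unfolding c_def v_def by (simp add: vector_scaleR_component scaleR_conv_of_real[where 'a=complex])
  have Vc: "V (c t) $ a = complex_of_real (H t * sqrt t)" if "t \<ge> 0" for t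
    unfolding hV Nc[OF that] ca by simp
  have Hd: "H differentiable (at t)" if t0: "t > 0" for t
  proof -
    have sq: "sqrt differentiable (at t)"
      using DERIV_real_sqrt[OF t0] by (auto simp: differentiable_def has_field_derivative_def)
    have cd: "c differentiable (at t)"
      unfolding c_def by (rule differentiable_scaleR[OF sq differentiable_const])
    have fd: "(\<lambda>w. V w $ a) differentiable (at (c t))" using hol unfolding holomorphic_field_def by blast
    have phid: "(\<lambda>t. V (c t) $ a) differentiable (at t)"
      by (rule differentiable_compose[OF fd cd])
    have red: "(\<lambda>t. Re (V (c t) $ a)) differentiable (at t)"
      by (rule differentiable_compose[OF bounded_linear_imp_differentiable[OF bounded_linear_Re] phid])
    have psid: "(\<lambda>t. Re (V (c t) $ a) / sqrt t) differentiable (at t)"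
      by (rule differentiable_divide[OF red sq]) (use t0 in simp)
    show ?thesis
    proof (rule differentiable_transform_within[OF psid t0])
      fix x' assume "x' \<in> UNIV" "dist x' t < t"
      then have x0: "x' > 0" by (auto simp: dist_real_def)
      show "Re (V (c x') $ a) / sqrt x' = H x'"
        using x0 by (simp add: Vc)
    qed simp
  qed
  have H0: "(H has_real_derivative 0) (at t)" if t0: "t > 0" for t
  proof -
    have dH: "(H has_real_derivative deriv H t) (at t)"
      using Hd[OF t0] by (simp add: DERIV_deriv_iff_real_differentiable)
    have dH': "(H has_real_derivative deriv H t) (at ((norm (c t))^2))"
      using dH Nc t0 by simp
    have fe: "(\<lambda>w. V w $ a) = (\<lambda>w. complex_of_real (H ((norm w)^2)) * w$a)"
      by (rule ext) (rule hV)
    have "wirtbar (\<lambda>w. V w $ a) a (c t) = 0" using hol unfolding holomorphic_field_def by blast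
    then have "complex_of_real (deriv H t) * c t $ a * c t $ a = 0"
      unfolding fe wirtbar_FNk[OF dH'] .
    then have "deriv H t * t = 0"
      unfolding ca using t0 by (simp flip: of_real_mult)
    then have "deriv H t = 0" using t0 by simp
    then show ?thesis using dH by simp
  qed
  have "\<forall>t>0. deriv (RS CARD('n) u) t = H 1 * G1 u t"
  proof (intro allI impI)
    fix t :: real assume t0: "t > 0"
    have "H t = H 1" by (rule const_pos[OF H0 t0])
    moreover have "G1 u t > 0" using pG1[OF gd, of t] t0 by simp
    ultimately show "deriv (RS CARD('n) u) t = H 1 * G1 u t"
      unfolding H_def by (simp add: field_simps)
  qed
  then show ?thesis by blast
qed


lemma const0:
  fixes f :: "real \<Rightarrow> real"
  assumes c: "\<And>x. x \<ge> 0 \<Longrightarrow> isCont f x" and d: "\<And>x. x > 0 \<Longrightarrow> (f has_real_derivative 0) (at x)"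
    and t: "t \<ge> 0"
  shows "f t = f 0"
proof (cases "t = 0")
  case False
  then have t0: "t > 0" using t by simp
  have "continuous_on {0..t} f"
    by (rule continuous_at_imp_continuous_on) (use c in auto)
  then show ?thesis using DERIV_isconst2[of 0 t f t] t0 d by auto
qed simp

context
  fixes u :: "real \<Rightarrow> real" and m :: nat and K :: real
  assumes gd: "good u" and dK: "\<forall>t>0. deriv (RS (m + 2) u) t = K * G1 u t"
begin

definition "gg t = t * D u 1 t"

lemma gg0: "gg 0 = 0" by (simp add: gg_def)

lemma dgg: "x \<ge> 0 \<Longrightarrow> (gg has_real_derivative G1 u x) (at x)"
  unfolding gg_def[abs_def] by (rule dG[OF gd])

lemma ggc: "x \<ge> 0 \<Longrightarrow> isCont gg x" using dgg DERIV_isCont by blast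

lemma RS_lin: "t \<ge> 0 \<Longrightarrow> RS (m + 2) u t = RS (m + 2) u 0 + K * gg t"
proof -
  assume t: "t \<ge> 0"
  let ?f = "\<lambda>t. RS (m + 2) u t - K * gg t"
  have d: "(?f has_real_derivative deriv (RS (m + 2) u) x - K * G1 u x) (at x)" if "x \<ge> 0" for x
  proof -
    have "(RS (m + 2) u has_real_derivative deriv (RS (m + 2) u) x) (at x)"
      using RS_diff[OF gd that] by (simp add: DERIV_deriv_iff_real_differentiable)
    then show ?thesis using dgg[OF that] by (auto intro!: derivative_eq_intros)
  qed
  have "?f t = ?f 0"
  proof (rule const0[OF _ _ t])
    show "isCont ?f x" if "x \<ge> 0" for x using d[OF that] DERIV_isCont by blast
    show "(?f has_real_derivative 0) (at x)" if "x > 0" for x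
      using d[of x] that dK by simp
  qed
  then show ?thesis by (simp add: gg0)
qed

definition "YY t = gg t ^ (m + 1) * (t * L1 (m + 2) u t)"
definition "PP t = gg t ^ (m + 1) * (t * G1 u t)"
definition "AA = RS (m + 2) u 0"

lemma dYY: "x \<ge> 0 \<Longrightarrow> (YY has_real_derivative
   real (m + 1) * gg x ^ m * G1 u x * (x * L1 (m + 2) u x) + gg x ^ (m + 1) * (L1 (m + 2) u x + x * L2 (m + 2) u x)) (at x)"
  unfolding YY_def[abs_def]
  using dgg dL1[OF gd]
  by (auto intro!: derivative_eq_intros simp: algebra_simps)

lemma dPP: "x \<ge> 0 \<Longrightarrow> (PP has_real_derivative
   real (m + 1) * gg x ^ m * G1 u x * (x * G1 u x) + gg x ^ (m + 1) * (G1 u x + x * G2 u x)) (at x)"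
  unfolding PP_def[abs_def]
  using dgg dG1[OF gd]
  by (auto intro!: derivative_eq_intros simp: algebra_simps)

lemma YY_id: "x \<ge> 0 \<Longrightarrow> real (m + 1) * gg x ^ m * G1 u x * (x * L1 (m + 2) u x) + gg x ^ (m + 1) * (L1 (m + 2) u x + x * L2 (m + 2) u x)
   = - RS (m + 2) u x * gg x ^ (m + 1) * G1 u x"
proof -
  assume x: "x \<ge> 0"
  have p1: "D u 1 x > 0" and p2: "G1 u x > 0" using pD1[OF gd x] pG1[OF gd x] by auto
  have e: "gg x ^ (m + 1) = gg x ^ m * x * D u 1 x" by (simp add: gg_def power_add mult.assoc)
  show ?thesis unfolding e RS_def using p1 p2 by (simp add: field_simps)
qed

lemma PP_alg:
  fixes d1 d2 g2 x p G c :: real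
  assumes d1: "d1 \<noteq> 0" and G0: "G \<noteq> 0" and hG: "G = d1 + x * d2"
  shows "c * p * G * (x * G) + p * (x * d1) * (G + x * g2)
     = G * ((c + 1) * (p * (x * d1)) + p * (x * d1) * (x * (c * d2 / d1 + g2 / G)))"
proof -
  have "G * ((c + 1) * (p * (x * d1)) + p * (x * d1) * (x * (c * d2 / d1 + g2 / G)))
      = G * (c + 1) * p * (x * d1) + p * x * x * c * d2 * G + p * x * x * d1 * g2"
    using d1 G0 by (simp add: field_simps)
  also have "\<dots> = c * p * G * (x * G) + p * (x * d1) * (G + x * g2)"
    unfolding hG by (simp add: algebra_simps)
  finally show ?thesis by simp
qed

lemma PP_id: "x \<ge> 0 \<Longrightarrow> real (m + 1) * gg x ^ m * G1 u x * (x * G1 u x) + gg x ^ (m + 1) * (G1 u x + x * G2 u x)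
   = G1 u x * (real (m + 2) * gg x ^ (m + 1) + YY x)"
proof -
  assume x: "x \<ge> 0"
  have p1: "D u 1 x > 0" and p2: "G1 u x > 0" using pD1[OF gd x] pG1[OF gd x] by auto
  have e: "gg x ^ (m + 1) = gg x ^ m * (x * D u 1 x)" by (simp add: gg_def power_add mult.assoc)
  have e2: "real (m + 2) = real (m + 1) + 1" by simp
  have e3: "real (m + 2 - 1) = real (m + 1)" by simp
  show ?thesis unfolding e YY_def L1_def e2 e3
    by (rule PP_alg) (use p1 p2 in \<open>auto simp: G1_def\<close>)
qed

definition "FF t = YY t + AA * gg t ^ (m + 2) / real (m + 2) + K * gg t ^ (m + 3) / real (m + 3)"

lemma dFF: "x \<ge> 0 \<Longrightarrow> (FF has_real_derivative 0) (at x)"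
proof -
  assume x: "x \<ge> 0"
  note dp2 = DERIV_cdivide[OF DERIV_cmult[OF DERIV_power[OF dgg[OF x], of "m + 2"]], of AA "real (m + 2)"]
  note dp3 = DERIV_cdivide[OF DERIV_cmult[OF DERIV_power[OF dgg[OF x], of "m + 3"]], of K "real (m + 3)"]
  have e1: "m + 2 - Suc 0 = m + 1" and e2: "m + 3 - Suc 0 = m + 2" by simp_all
  have "(FF has_real_derivative (real (m + 1) * gg x ^ m * G1 u x * (x * L1 (m + 2) u x) + gg x ^ (m + 1) * (L1 (m + 2) u x + x * L2 (m + 2) u x))
      + AA * (real (m + 2) * (G1 u x * gg x ^ (m + 1))) / real (m + 2)
      + K * (real (m + 3) * (G1 u x * gg x ^ (m + 2))) / real (m + 3)) (at x)"
    unfolding FF_def[abs_def]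
    using DERIV_add[OF DERIV_add[OF dYY[OF x] dp2] dp3] unfolding e1 e2 by simp
  moreover have "(real (m + 1) * gg x ^ m * G1 u x * (x * L1 (m + 2) u x) + gg x ^ (m + 1) * (L1 (m + 2) u x + x * L2 (m + 2) u x))
      + AA * (real (m + 2) * (G1 u x * gg x ^ (m + 1))) / real (m + 2)
      + K * (real (m + 3) * (G1 u x * gg x ^ (m + 2))) / real (m + 3) = 0"
  proof -
    have e: "gg x ^ (m + 2) = gg x ^ (m + 1) * gg x" by (simp add: power_add)
    have "(real (m + 1) * gg x ^ m * G1 u x * (x * L1 (m + 2) u x) + gg x ^ (m + 1) * (L1 (m + 2) u x + x * L2 (m + 2) u x))
      + AA * (real (m + 2) * (G1 u x * gg x ^ (m + 1))) / real (m + 2)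
      + K * (real (m + 3) * (G1 u x * gg x ^ (m + 2))) / real (m + 3)
      = gg x ^ (m + 1) * G1 u x * (AA + K * gg x - RS (m + 2) u x)"
    proof -
      have c2: "AA * (real (m + 2) * X) / real (m + 2) = AA * X" for X
        by (metis nonzero_mult_div_cancel_left mult.left_commute of_nat_eq_0_iff add_eq_0_iff_both_eq_0 zero_neq_numeral times_divide_eq_right)
      have c3: "K * (real (m + 3) * X) / real (m + 3) = K * X" for X
        by (metis nonzero_mult_div_cancel_left mult.left_commute of_nat_eq_0_iff add_eq_0_iff_both_eq_0 zero_neq_numeral times_divide_eq_right)
      show ?thesis unfolding YY_id[OF x] e c2 c3 by (simp add: algebra_simps)
    qed
    also have "\<dots> = 0" using RS_lin[OF x] by (simp add: AA_def)
    finally show ?thesis .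
  qed
  ultimately show ?thesis by simp
qed

lemma YY_val: "t \<ge> 0 \<Longrightarrow> YY t = - AA * gg t ^ (m + 2) / real (m + 2) - K * gg t ^ (m + 3) / real (m + 3)"
proof -
  assume t: "t \<ge> 0"
  have "FF t = FF 0"
    by (rule const0[OF _ _ t]) (use dFF DERIV_isCont in \<open>auto\<close>)
  moreover have "FF 0 = 0" by (simp add: FF_def YY_def gg0)
  ultimately show ?thesis by (simp add: FF_def algebra_simps)
qed

definition "QQ t = PP t - (gg t ^ (m + 2) - AA * gg t ^ (m + 3) / (real (m + 2) * real (m + 3))
    - K * gg t ^ (m + 4) / (real (m + 3) * real (m + 4)))"

lemma dQQ: "x \<ge> 0 \<Longrightarrow> (QQ has_real_derivative 0) (at x)"
proof -
  assume x: "x \<ge> 0"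
  note dp2 = DERIV_power[OF dgg[OF x], of "m + 2"]
  note dp3 = DERIV_cdivide[OF DERIV_cmult[OF DERIV_power[OF dgg[OF x], of "m + 3"]], of AA "real (m + 2) * real (m + 3)"]
  note dp4 = DERIV_cdivide[OF DERIV_cmult[OF DERIV_power[OF dgg[OF x], of "m + 4"]], of K "real (m + 3) * real (m + 4)"]
  have e1: "m + 2 - Suc 0 = m + 1" and e2: "m + 3 - Suc 0 = m + 2" and e3: "m + 4 - Suc 0 = m + 3" by simp_all
  have "(QQ has_real_derivative
      (real (m + 1) * gg x ^ m * G1 u x * (x * G1 u x) + gg x ^ (m + 1) * (G1 u x + x * G2 u x))
      - (real (m + 2) * (G1 u x * gg x ^ (m + 1))
         - AA * (real (m + 3) * (G1 u x * gg x ^ (m + 2))) / (real (m + 2) * real (m + 3))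
         - K * (real (m + 4) * (G1 u x * gg x ^ (m + 3))) / (real (m + 3) * real (m + 4)))) (at x)"
    unfolding QQ_def[abs_def]
    using DERIV_diff[OF dPP[OF x] DERIV_diff[OF DERIV_diff[OF dp2 dp3] dp4]] unfolding e1 e2 e3 by simp
  moreover have "(real (m + 1) * gg x ^ m * G1 u x * (x * G1 u x) + gg x ^ (m + 1) * (G1 u x + x * G2 u x))
      - (real (m + 2) * (G1 u x * gg x ^ (m + 1))
         - AA * (real (m + 3) * (G1 u x * gg x ^ (m + 2))) / (real (m + 2) * real (m + 3))
         - K * (real (m + 4) * (G1 u x * gg x ^ (m + 3))) / (real (m + 3) * real (m + 4))) = 0"
  proof -
    have c3: "AA * (real (m + 3) * X) / (real (m + 2) * real (m + 3)) = AA * X / real (m + 2)" for X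
    proof -
      have "AA * (real (m + 3) * X) / (real (m + 2) * real (m + 3)) = (AA * X) * real (m + 3) / (real (m + 2) * real (m + 3))"
        by (simp only: mult_ac)
      also have "\<dots> = AA * X / real (m + 2)" by (rule mult_divide_mult_cancel_right) simp
      finally show ?thesis .
    qed
    have c4: "K * (real (m + 4) * X) / (real (m + 3) * real (m + 4)) = K * X / real (m + 3)" for X
    proof -
      have "K * (real (m + 4) * X) / (real (m + 3) * real (m + 4)) = (K * X) * real (m + 4) / (real (m + 3) * real (m + 4))"
        by (simp only: mult_ac)
      also have "\<dots> = K * X / real (m + 3)" by (rule mult_divide_mult_cancel_right) simp
      finally show ?thesis .
    qed
    show ?thesis unfolding PP_id[OF x] YY_val[OF x] c3 c4 by (simp add: algebra_simps)
  qed
  ultimately show ?thesis by simp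
qed

lemma PP_val: "t \<ge> 0 \<Longrightarrow> PP t = gg t ^ (m + 2) - AA * gg t ^ (m + 3) / (real (m + 2) * real (m + 3))
    - K * gg t ^ (m + 4) / (real (m + 3) * real (m + 4))"
proof -
  assume t: "t \<ge> 0"
  have "QQ t = QQ 0"
    by (rule const0[OF _ _ t]) (use dQQ DERIV_isCont in \<open>auto\<close>)
  moreover have "QQ 0 = 0" by (simp add: QQ_def PP_def gg0 power_0_left)
  ultimately show ?thesis by (simp add: QQ_def)
qed

lemma gg_pos: "t > 0 \<Longrightarrow> gg t > 0"
proof -
  assume t: "t > 0"
  have "gg 0 < gg t"
    by (rule DERIV_pos_imp_increasing[OF t]) (use dgg pG1[OF gd] in auto)
  then show ?thesis by (simp add: gg0)
qed

lemma ode: "t > 0 \<Longrightarrow> t * G1 u t = gg t * (1 + (- AA / (real (m + 2) * real (m + 3))) * gg t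
      + (- K / (real (m + 3) * real (m + 4))) * (gg t)^2)"
proof -
  assume t: "t > 0"
  have gp: "gg t > 0" by (rule gg_pos[OF t])
  have "gg t ^ (m + 1) * (t * G1 u t) = gg t ^ (m + 1) * (gg t * (1 + (- AA / (real (m + 2) * real (m + 3))) * gg t
      + (- K / (real (m + 3) * real (m + 4))) * (gg t)^2))"
  proof -
    have "gg t ^ (m + 1) * (t * G1 u t) = PP t" by (simp add: PP_def)
    also have "\<dots> = gg t ^ (m + 2) - AA * gg t ^ (m + 3) / (real (m + 2) * real (m + 3))
      - K * gg t ^ (m + 4) / (real (m + 3) * real (m + 4))" using PP_val t by simp
    also have "\<dots> = gg t ^ (m + 1) * (gg t * (1 + (- AA / (real (m + 2) * real (m + 3))) * gg t
      + (- K / (real (m + 3) * real (m + 4))) * (gg t)^2))"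
    proof -
      have e: "gg t ^ (m + 2) = gg t ^ (m + 1) * gg t" "gg t ^ (m + 3) = gg t ^ (m + 1) * gg t ^ 2"
        "gg t ^ (m + 4) = gg t ^ (m + 1) * gg t ^ 3"
        by (simp_all add: power_add power2_eq_square power3_eq_cube numeral_eq_Suc algebra_simps)
      show ?thesis unfolding e by (simp add: algebra_simps power2_eq_square power3_eq_cube)
    qed
    finally show ?thesis .
  qed
  then show ?thesis using gp by simp
qed

end


theorem theorem1p1:
  fixes u :: "real \<Rightarrow> real"
  assumes n2: "CARD('n::finite) \<ge> 2"
    and kp: "kaehler_potential u"
    and ext: "extremal u TYPE('n)"
  defines "g \<equiv> gfun u"
  shows
   "(\<exists>C. \<forall>z::complex^'n. scal u z = C)
    \<or> (\<exists>\<beta> c. \<beta> > 0 \<and> strict_mono_on {0<..} g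
         \<and> (\<forall>s>0. 0 < g s \<and> g s < \<beta>
               \<and> s * deriv g s = 1 / \<beta>\<^sup>2 * g s * (g s - \<beta>)\<^sup>2
               \<and> ln (g s) - ln (\<beta> - g s) - \<beta> / (g s - \<beta>) = ln s + c)
         \<and> (\<forall>z::complex^'n. scal u z > 0)
         \<and> \<not> (\<exists>C. \<forall>z::complex^'n. scal u z = C))
    \<or> (\<exists>\<gamma> \<beta> c. \<gamma> < 0 \<and> 0 < \<beta> \<and> strict_mono_on {0<..} g
         \<and> (\<forall>s>0. 0 < g s \<and> g s < \<beta>
               \<and> s * deriv g s = 1 / (\<beta> * \<gamma>) * g s * (g s - \<beta>) * (g s - \<gamma>)
               \<and> ln (g s) + \<beta> * \<gamma> / (\<beta> * (\<beta> - \<gamma>)) * ln (\<beta> - g s)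
                   + \<beta> * \<gamma> / (\<gamma> * (\<gamma> - \<beta>)) * ln (g s - \<gamma>) = ln s + c))
    \<or> (\<exists>\<gamma> \<beta> c. 0 < \<beta> \<and> \<beta> < \<gamma> \<and> strict_mono_on {0<..} g
         \<and> (\<forall>s>0. 0 < g s \<and> g s < \<beta>
               \<and> s * deriv g s = 1 / (\<beta> * \<gamma>) * g s * (g s - \<beta>) * (g s - \<gamma>)
               \<and> ln (g s) + \<beta> * \<gamma> / (\<beta> * (\<beta> - \<gamma>)) * ln (\<beta> - g s)
                   + \<beta> * \<gamma> / (\<gamma> * (\<gamma> - \<beta>)) * ln (\<gamma> - g s) = ln s + c))"
proof -
  have gd: "good u" by (rule kp_good[OF kp])
  obtain m where m: "CARD('n) = m + 2" using n2 by (metis add.commute le_Suc_ex)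
  obtain K where K: "\<forall>t>0. deriv (RS (m + 2) u) t = K * G1 u t"
    using H_const[OF gd ext] unfolding m by blast
  have scal: "scal u z = RS (m + 2) u ((norm z)^2)" for z :: "complex^'n"
    using scal_eq[OF gd, of z] unfolding m .
  have gg: "g = gg u"
    unfolding g_def gg_def[OF gd K, abs_def] gfun_def D1 ..
  have RSl: "RS (m + 2) u t = AA u m + K * g t" if "t \<ge> 0" for t
    using RS_lin[OF gd K that] unfolding gg AA_def[OF gd K] .
  have dg: "(g has_real_derivative G1 u x) (at x)" if "x \<ge> 0" for x
    unfolding gg by (rule dgg[OF gd K that])
  have g1p: "G1 u x > 0" if "x \<ge> 0" for x using pG1[OF gd that] .
  have g0: "g 0 = 0" unfolding gg by (rule gg0[OF gd K])
  have derivg: "deriv g s = G1 u s" if "s \<ge> 0" for s using DERIV_imp_deriv[OF dg[OF that]] .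
  have smono: "strict_mono_on {0<..} g"
  proof (rule strict_mono_onI)
    fix r s :: real assume rs: "r \<in> {0<..}" "s \<in> {0<..}" "r < s"
    have H: "\<exists>y. (g has_real_derivative y) (at x) \<and> 0 < y" if "r \<le> x" "x \<le> s" for x
    proof -
      have "x \<ge> 0" using rs that by simp
      then show ?thesis using dg g1p by blast
    qed
    show "g r < g s" by (rule DERIV_pos_imp_increasing[OF rs(3) H])
  qed
  have gnn: "g t \<ge> 0" if "t \<ge> 0" for t
  proof (cases "t = 0")
    case False
    have H: "\<exists>y. (g has_real_derivative y) (at x) \<and> 0 < y" if "0 \<le> x" "x \<le> t" for x
      using dg g1p that by blast
    have t0: "0 < t" using that False by simp
    have "g 0 < g t" by (rule DERIV_pos_imp_increasing[OF t0 H])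
    then show ?thesis using g0 by simp
  qed (simp add: g0)
  have scalg: "scal u z = AA u m + K * g ((norm z)^2)" for z :: "complex^'n"
    unfolding scal by (rule RSl) simp
  show ?thesis
  proof (cases "K = 0")
    case True
    then have "\<forall>z::complex^'n. scal u z = AA u m" using scalg by simp
    then show ?thesis by blast
  next
    case K0: False
    define a where "a = - AA u m / (real (m + 2) * real (m + 3))"
    define b where "b = - K / (real (m + 3) * real (m + 4))"
    have b0: "b \<noteq> 0" unfolding b_def using K0 by simp
    have odeg: "t * G1 u t = g t * (1 + a * g t + b * (g t)^2)" if "t > 0" for t
      unfolding gg a_def b_def by (rule ode[OF gd K that])
    have cl0: "\<And>x. 0 \<le> x \<Longrightarrow> (g has_real_derivative G1 u x) (at x)" by (rule dg)
    have cl1: "\<And>x. 0 \<le> x \<Longrightarrow> 0 < G1 u x" by (rule g1p)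
    have cl3: "\<And>t. 0 < t \<Longrightarrow> t * G1 u t = g t * (1 + a * g t + b * (g t)^2)" by (rule odeg)
    have cl: "(\<exists>\<beta> c. \<beta> > 0 \<and> a = - 2 / \<beta> \<and> b = 1 / \<beta>^2 \<and> (\<forall>s\<ge>0. g s < \<beta>)
         \<and> (\<forall>s>0. 0 < g s \<and> g s < \<beta>
               \<and> s * G1 u s = 1 / \<beta>\<^sup>2 * g s * (g s - \<beta>)\<^sup>2
               \<and> ln (g s) - ln (\<beta> - g s) - \<beta> / (g s - \<beta>) = ln s + c))
    \<or> (\<exists>\<gamma> \<beta> c. \<gamma> < 0 \<and> 0 < \<beta>
         \<and> (\<forall>s>0. 0 < g s \<and> g s < \<beta>
               \<and> s * G1 u s = 1 / (\<beta> * \<gamma>) * g s * (g s - \<beta>) * (g s - \<gamma>)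
               \<and> ln (g s) + \<beta> * \<gamma> / (\<beta> * (\<beta> - \<gamma>)) * ln (\<beta> - g s)
                   + \<beta> * \<gamma> / (\<gamma> * (\<gamma> - \<beta>)) * ln (g s - \<gamma>) = ln s + c))
    \<or> (\<exists>\<gamma> \<beta> c. 0 < \<beta> \<and> \<beta> < \<gamma>
         \<and> (\<forall>s>0. 0 < g s \<and> g s < \<beta>
               \<and> s * G1 u s = 1 / (\<beta> * \<gamma>) * g s * (g s - \<beta>) * (g s - \<gamma>)
               \<and> ln (g s) + \<beta> * \<gamma> / (\<beta> * (\<beta> - \<gamma>)) * ln (\<beta> - g s)
                   + \<beta> * \<gamma> / (\<gamma> * (\<gamma> - \<beta>)) * ln (\<gamma> - g s) = ln s + c))"
      by (rule classify[of g "G1 u" a b]) (use cl0 cl1 g0 cl3 b0 in auto)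
    from cl show ?thesis
    proof (elim disjE exE conjE)
      fix \<beta> c assume bp: "\<beta> > 0" and ea: "a = - 2 / \<beta>" and eb: "b = 1 / \<beta>^2"
        and below: "\<forall>s\<ge>0. g s < \<beta>"
        and P: "\<forall>s>0. 0 < g s \<and> g s < \<beta> \<and> s * G1 u s = 1 / \<beta>\<^sup>2 * g s * (g s - \<beta>)\<^sup>2
               \<and> ln (g s) - ln (\<beta> - g s) - \<beta> / (g s - \<beta>) = ln s + c"
      have eA: "AA u m = 2 * real (m + 2) * real (m + 3) / \<beta>"
      proof -
        have P0: "real (m + 2) * real (m + 3) \<noteq> 0" by simp
        have "AA u m / (real (m + 2) * real (m + 3)) = 2 / \<beta>" using ea unfolding a_def by simp
        then have "AA u m = 2 / \<beta> * (real (m + 2) * real (m + 3))" using P0 by (simp add: divide_eq_eq)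
        then show ?thesis by simp
      qed
      have eK: "K = - (real (m + 3) * real (m + 4) / \<beta>^2)"
      proof -
        have P0: "real (m + 3) * real (m + 4) \<noteq> 0" by simp
        have "K / (real (m + 3) * real (m + 4)) = - (1 / \<beta>^2)" using eb unfolding b_def by simp
        then have "K = - (1 / \<beta>^2) * (real (m + 3) * real (m + 4))" using P0 by (simp add: divide_eq_eq)
        then show ?thesis by simp
      qed
      have pos: "scal u z > 0" for z :: "complex^'n"
      proof -
        let ?t = "g ((norm z)^2)"
        have t1: "?t < \<beta>" using below by simp
        have t0: "?t \<ge> 0" using gnn by simp
        have Kn: "K < 0" using eK bp by (simp add: divide_neg_pos)
        have "K * ?t > K * \<beta>" using t1 Kn by simp
        moreover have "AA u m + K * \<beta> = real m * real (m + 3) / \<beta>"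
          unfolding eA eK using bp by (simp add: field_simps power2_eq_square)
        moreover have "real m * real (m + 3) / \<beta> \<ge> 0" using bp by simp
        ultimately show ?thesis unfolding scalg by linarith
      qed
      have nconst: "\<not> (\<exists>C. \<forall>z::complex^'n. scal u z = C)"
      proof
        assume "\<exists>C. \<forall>z::complex^'n. scal u z = C"
        then obtain C where C: "\<forall>z::complex^'n. scal u z = C" by blast
        obtain i :: 'n where True by blast
        define z1 where "z1 = ((1::real) *\<^sub>R axis i (1::complex) :: complex^'n)"
        have n1: "(norm z1)^2 = 1" unfolding z1_def using N_axis[of 1 i] by simp
        have "scal u (0::complex^'n) = scal u z1" using C by simp
        then have "K * g 1 = 0" unfolding scalg n1 by (simp add: g0)
        moreover have "g 1 > 0" using P by simp
        ultimately show False using K0 by simp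
      qed
      have Q: "\<forall>s>0. 0 < g s \<and> g s < \<beta>
               \<and> s * deriv g s = 1 / \<beta>\<^sup>2 * g s * (g s - \<beta>)\<^sup>2
               \<and> ln (g s) - ln (\<beta> - g s) - \<beta> / (g s - \<beta>) = ln s + c"
        using P derivg by simp
      have "\<exists>\<beta> c. \<beta> > 0 \<and> strict_mono_on {0<..} g
         \<and> (\<forall>s>0. 0 < g s \<and> g s < \<beta>
               \<and> s * deriv g s = 1 / \<beta>\<^sup>2 * g s * (g s - \<beta>)\<^sup>2
               \<and> ln (g s) - ln (\<beta> - g s) - \<beta> / (g s - \<beta>) = ln s + c)
         \<and> (\<forall>z::complex^'n. scal u z > 0)
         \<and> \<not> (\<exists>C. \<forall>z::complex^'n. scal u z = C)"
        using bp smono Q pos nconst by blast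
      then show ?thesis by blast
    next
      fix \<gamma> \<beta> c assume gn: "\<gamma> < 0" and bp: "0 < \<beta>"
        and P: "\<forall>s>0. 0 < g s \<and> g s < \<beta>
               \<and> s * G1 u s = 1 / (\<beta> * \<gamma>) * g s * (g s - \<beta>) * (g s - \<gamma>)
               \<and> ln (g s) + \<beta> * \<gamma> / (\<beta> * (\<beta> - \<gamma>)) * ln (\<beta> - g s)
                   + \<beta> * \<gamma> / (\<gamma> * (\<gamma> - \<beta>)) * ln (g s - \<gamma>) = ln s + c"
      have Q: "\<forall>s>0. 0 < g s \<and> g s < \<beta>
               \<and> s * deriv g s = 1 / (\<beta> * \<gamma>) * g s * (g s - \<beta>) * (g s - \<gamma>)
               \<and> ln (g s) + \<beta> * \<gamma> / (\<beta> * (\<beta> - \<gamma>)) * ln (\<beta> - g s)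
                   + \<beta> * \<gamma> / (\<gamma> * (\<gamma> - \<beta>)) * ln (g s - \<gamma>) = ln s + c"
        using P derivg by simp
      have "\<exists>\<gamma> \<beta> c. \<gamma> < 0 \<and> 0 < \<beta> \<and> strict_mono_on {0<..} g
         \<and> (\<forall>s>0. 0 < g s \<and> g s < \<beta>
               \<and> s * deriv g s = 1 / (\<beta> * \<gamma>) * g s * (g s - \<beta>) * (g s - \<gamma>)
               \<and> ln (g s) + \<beta> * \<gamma> / (\<beta> * (\<beta> - \<gamma>)) * ln (\<beta> - g s)
                   + \<beta> * \<gamma> / (\<gamma> * (\<gamma> - \<beta>)) * ln (g s - \<gamma>) = ln s + c)"
        using gn bp smono Q by blast
      then show ?thesis by blast
    next
      fix \<gamma> \<beta> c assume bp: "0 < \<beta>" and bg: "\<beta> < \<gamma>"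
        and P: "\<forall>s>0. 0 < g s \<and> g s < \<beta>
               \<and> s * G1 u s = 1 / (\<beta> * \<gamma>) * g s * (g s - \<beta>) * (g s - \<gamma>)
               \<and> ln (g s) + \<beta> * \<gamma> / (\<beta> * (\<beta> - \<gamma>)) * ln (\<beta> - g s)
                   + \<beta> * \<gamma> / (\<gamma> * (\<gamma> - \<beta>)) * ln (\<gamma> - g s) = ln s + c"
      have Q: "\<forall>s>0. 0 < g s \<and> g s < \<beta>
               \<and> s * deriv g s = 1 / (\<beta> * \<gamma>) * g s * (g s - \<beta>) * (g s - \<gamma>)
               \<and> ln (g s) + \<beta> * \<gamma> / (\<beta> * (\<beta> - \<gamma>)) * ln (\<beta> - g s)
                   + \<beta> * \<gamma> / (\<gamma> * (\<gamma> - \<beta>)) * ln (\<gamma> - g s) = ln s + c"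
        using P derivg by simp
      have "\<exists>\<gamma> \<beta> c. 0 < \<beta> \<and> \<beta> < \<gamma> \<and> strict_mono_on {0<..} g
         \<and> (\<forall>s>0. 0 < g s \<and> g s < \<beta>
               \<and> s * deriv g s = 1 / (\<beta> * \<gamma>) * g s * (g s - \<beta>) * (g s - \<gamma>)
               \<and> ln (g s) + \<beta> * \<gamma> / (\<beta> * (\<beta> - \<gamma>)) * ln (\<beta> - g s)
                   + \<beta> * \<gamma> / (\<gamma> * (\<gamma> - \<beta>)) * ln (\<gamma> - g s) = ln s + c)"
        using bp bg smono Q by blast
      then show ?thesis by blast
    qed
  qed
qed


end
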